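(* Let $\delta>0$ and $0<c\le2\sqrt\delta$, and set $\tilde\lambda:=1-\frac{c^2}{4\delta}\ge0$. Then $\tilde\lambda$ is an eigenvalue in the extended sense: the Riccati solution $\eta^u(z;\tilde\lambda)$ tending to $\mu^u_-(\tilde\lambda)$ as $z\to-\infty$ tends, as $z\to+\infty$, to the double root $\mu^s_+(\tilde\lambda)=\mu^u_+(\tilde\lambda)=-\frac{c}{2\delta}$. In particular, for $0<c<2\sqrt\delta$ the linearised operator about the travelling wave has the positive real eigenvalue $\tilde\lambda$.
   Context: $\hat u$ solves $\delta\hat u''+c\hat u'+\hat u(1-\hat u)=0$ with $\hat u(-\infty)=1$, $\hat u(+\infty)=0$. Riccati equation: $\eta'=\frac{\lambda-1+2\hat u(z)}{\delta}-\frac c\delta\eta-\eta^2$ on $\mathbb CP^1$ (equation for $\eta=q/p$ along solutions of $p'=q$, $q'=\frac{\lambda-1+2\hat u}{\delta}p-\frac c\delta q$). $\mu^{u}_-(\lambda)=\frac{-c+\sqrt{c^2+4\delta(\lambda+1)}}{2\delta}$, $\mu^{u,s}_+(\lambda)=\frac{-c\pm\sqrt{c^2+4\delta(\lambda-1)}}{2\delta}$. For $\mathrm{Re}\,\lambda\ge0$, $\lambda$ is an eigenvalue in the extended sense if some solution of the Riccati equation tends to $\mu^u_-(\lambda)$ as $z\to-\infty$ and to $\mu^s_+(\lambda)$ as $z\to+\infty$. *)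

theory Defs
  imports "HOL-Analysis.Analysis"
begin

definition travelling_wave :: "real \<Rightarrow> real \<Rightarrow> (real \<Rightarrow> real) \<Rightarrow> bool" where
  "travelling_wave \<delta> c u \<longleftrightarrow>
     (\<exists>u'. (\<forall>z. (u has_real_derivative u' z) (at z)) \<and>
           (\<forall>z. (u' has_real_derivative (- (c * u' z + u z * (1 - u z)) / \<delta>)) (at z))) \<and>
     (u \<longlongrightarrow> 1) at_bot \<and> (u \<longlongrightarrow> 0) at_top"

definition mu_u_minus :: "real \<Rightarrow> real \<Rightarrow> complex \<Rightarrow> complex" where
  "mu_u_minus \<delta> c lam = (- c + csqrt (c\<^sup>2 + 4 * \<delta> * (lam + 1))) / (2 * \<delta>)"

definition mu_u_plus :: "real \<Rightarrow> real \<Rightarrow> complex \<Rightarrow> complex" where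
  "mu_u_plus \<delta> c lam = (- c + csqrt (c\<^sup>2 + 4 * \<delta> * (lam - 1))) / (2 * \<delta>)"

definition mu_s_plus :: "real \<Rightarrow> real \<Rightarrow> complex \<Rightarrow> complex" where
  "mu_s_plus \<delta> c lam = (- c - csqrt (c\<^sup>2 + 4 * \<delta> * (lam - 1))) / (2 * \<delta>)"

text \<open>A solution of the Riccati equation on CP^1 is the projectivisation eta = q/p of a
  nonzero solution (p,q) of the linear system p' = q, q' = ((lambda-1+2u)/delta) p - (c/delta) q.\<close>
definition riccati_solution ::
    "real \<Rightarrow> real \<Rightarrow> (real \<Rightarrow> real) \<Rightarrow> complex \<Rightarrow> (real \<Rightarrow> complex) \<Rightarrow> (real \<Rightarrow> complex) \<Rightarrow> bool" where
  "riccati_solution \<delta> c u lam p q \<longleftrightarrow>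
     (\<forall>z. (p has_vector_derivative q z) (at z)) \<and>
     (\<forall>z. (q has_vector_derivative
            ((lam - 1 + 2 * u z) / \<delta> * p z - c / \<delta> * q z)) (at z)) \<and>
     (\<forall>z. p z \<noteq> 0 \<or> q z \<noteq> 0)"

definition proj_tendsto :: "(real \<Rightarrow> complex) \<Rightarrow> (real \<Rightarrow> complex) \<Rightarrow> complex \<Rightarrow> real filter \<Rightarrow> bool" where
  "proj_tendsto p q \<mu> F \<longleftrightarrow> (\<forall>\<^sub>F z in F. p z \<noteq> 0) \<and> ((\<lambda>z. q z / p z) \<longlongrightarrow> \<mu>) F"

definition eigenvalue_ext :: "real \<Rightarrow> real \<Rightarrow> (real \<Rightarrow> real) \<Rightarrow> complex \<Rightarrow> bool" where
  "eigenvalue_ext \<delta> c u lam \<longleftrightarrow> Re lam \<ge> 0 \<and>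
     (\<exists>p q. riccati_solution \<delta> c u lam p q \<and>
            proj_tendsto p q (mu_u_minus \<delta> c lam) at_bot \<and>
            proj_tendsto p q (mu_s_plus \<delta> c lam) at_top)"

end

theory Submission
  imports Defs "HOL-Real_Asymp.Real_Asymp"
begin


lemma G1:
  fixes f g f' g' :: "real \<Rightarrow> real"
  assumes "a \<le> b"
    and df: "\<And>x. x \<in> {a..b} \<Longrightarrow> (f has_real_derivative f' x) (at x)"
    and dg: "\<And>x. x \<in> {a..b} \<Longrightarrow> (g has_real_derivative g' x) (at x)"
    and le: "\<And>x. x \<in> {a..b} \<Longrightarrow> \<bar>f' x\<bar> \<le> g' x"
  shows "\<bar>f b - f a\<bar> \<le> g b - g a"
proof -
  have l2: "0 \<le> g' x + f' x" "0 \<le> g' x - f' x" if "x \<in> {a..b}" for x using le[OF that] by auto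
  have "(\<lambda>x. g x - f x) a \<le> (\<lambda>x. g x - f x) b"
    by (rule deriv_nonneg_imp_mono[where g="\<lambda>x. g x - f x" and g'="\<lambda>x. g' x - f' x"])
       (use df dg l2 assms(1) in \<open>auto intro!: DERIV_diff\<close>)
  moreover have "(\<lambda>x. g x + f x) a \<le> (\<lambda>x. g x + f x) b"
    by (rule deriv_nonneg_imp_mono[where g="\<lambda>x. g x + f x" and g'="\<lambda>x. g' x + f' x"])
       (use df dg l2 assms(1) in \<open>auto intro!: DERIV_add\<close>)
  ultimately show ?thesis by auto
qed

lemma MC:
  fixes P :: "real \<Rightarrow> real"
  assumes mono: "\<And>x y. a \<le> x \<Longrightarrow> x \<le> y \<Longrightarrow> P x \<le> P y"
    and bd: "\<And>x. a \<le> x \<Longrightarrow> P x \<le> U"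
  shows "\<exists>L. (P \<longlongrightarrow> L) at_top"
proof -
  have bdd: "bdd_above (P ` {a..})" using bd by (auto simp: bdd_above_def)
  let ?S = "Sup (P ` {a..})"
  have "(P \<longlongrightarrow> ?S) at_top"
  proof (rule increasing_tendsto)
    show "\<forall>\<^sub>F n in at_top. P n \<le> ?S"
      using bdd by (auto intro!: cSUP_upper simp: eventually_at_top_linorder)
    fix x assume "x < ?S"
    then obtain y where y: "y \<in> {a..}" "x < P y" using less_cSUP_iff[OF _ bdd] by auto
    show "\<forall>\<^sub>F n in at_top. x < P n"
      unfolding eventually_at_top_linorder
      by (rule exI[of _ y]) (use y mono in \<open>fastforce\<close>)
  qed
  then show ?thesis by blast
qed

lemma L1:
  fixes f g f' g' :: "real \<Rightarrow> real"
  assumes df: "\<And>x. x \<ge> a \<Longrightarrow> (f has_real_derivative f' x) (at x)"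
    and dg: "\<And>x. x \<ge> a \<Longrightarrow> (g has_real_derivative g' x) (at x)"
    and le: "\<And>x. x \<ge> a \<Longrightarrow> \<bar>f' x\<bar> \<le> g' x"
    and lim: "(g \<longlongrightarrow> Lg) at_top"
  shows "\<exists>Lf. (f \<longlongrightarrow> Lf) at_top \<and> (\<forall>x\<ge>a. \<bar>Lf - f x\<bar> \<le> Lg - g x)"
proof -
  have cmp: "\<bar>f y - f x\<bar> \<le> g y - g x" if "a \<le> x" "x \<le> y" for x y
    by (rule G1[OF that(2), where f'=f' and g'=g']) (use that df dg le in auto)
  have gle: "g x \<le> Lg" if "a \<le> x" for x
  proof (rule tendsto_lowerbound[OF lim])
    show "\<forall>\<^sub>F i in at_top. g x \<le> g i"
      unfolding eventually_at_top_linorder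
      by (rule exI[of _ x]) (use cmp that in fastforce)
  qed simp
  obtain L1 where L1: "((\<lambda>x. g x + f x) \<longlongrightarrow> L1) at_top"
  proof -
    have "\<exists>L. ((\<lambda>x. g x + f x) \<longlongrightarrow> L) at_top"
    proof (rule MC[where a=a and U="2*Lg + f a - g a"])
      show "g x + f x \<le> g y + f y" if "a \<le> x" "x \<le> y" for x y using cmp[OF that] by auto
      show "g x + f x \<le> 2*Lg + f a - g a" if "a \<le> x" for x
        using cmp[OF order.refl that] gle[OF that] gle[OF order.refl] by auto
    qed
    then show ?thesis using that by blast
  qed
  obtain L2 where L2: "((\<lambda>x. g x - f x) \<longlongrightarrow> L2) at_top"
  proof -
    have "\<exists>L. ((\<lambda>x. g x - f x) \<longlongrightarrow> L) at_top"
    proof (rule MC[where a=a and U="2*Lg - f a - g a"])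
      show "g x - f x \<le> g y - f y" if "a \<le> x" "x \<le> y" for x y using cmp[OF that] by auto
      show "g x - f x \<le> 2*Lg - f a - g a" if "a \<le> x" for x
        using cmp[OF order.refl that] gle[OF that] gle[OF order.refl] by auto
    qed
    then show ?thesis using that by blast
  qed
  have fl: "(f \<longlongrightarrow> (L1 - L2)/2) at_top"
  proof -
    have "((\<lambda>x. ((g x + f x) - (g x - f x)) * (1/2)) \<longlongrightarrow> (L1 - L2) * (1/2)) at_top"
      using tendsto_mult[OF tendsto_diff[OF L1 L2] tendsto_const] by blast
    then show ?thesis by simp
  qed
  moreover have "\<bar>(L1 - L2)/2 - f x\<bar> \<le> Lg - g x" if "a \<le> x" for x
  proof (rule tendsto_le[OF _ _ _ ])
    show "((\<lambda>y. g y - g x) \<longlongrightarrow> Lg - g x) at_top" by (intro tendsto_intros lim)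
    show "((\<lambda>y. \<bar>f y - f x\<bar>) \<longlongrightarrow> \<bar>(L1 - L2)/2 - f x\<bar>) at_top" by (intro tendsto_intros fl)
    show "\<forall>\<^sub>F y in at_top. \<bar>f y - f x\<bar> \<le> g y - g x"
      unfolding eventually_at_top_linorder by (rule exI[of _ x]) (use cmp that in auto)
  qed simp
  ultimately show ?thesis by blast
qed

lemma G4:
  fixes \<phi> :: "real \<Rightarrow> real"
  assumes "z \<le> y" and cont: "continuous_on {z..y} \<phi>"
    and der: "\<And>t. t \<in> {z..y} \<Longrightarrow> \<phi> t = 0 \<Longrightarrow> \<exists>d<0. (\<phi> has_real_derivative d) (at t)"
    and pos: "\<phi> y > 0"
  shows "\<phi> z > 0"
proof (rule ccontr)
  assume neg: "\<not> \<phi> z > 0"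
  define A where "A = {s \<in> {z..y}. \<phi> s \<le> 0}"
  have zA: "z \<in> A" using neg \<open>z \<le> y\<close> by (auto simp: A_def)
  have clA: "closed A" unfolding A_def
    by (rule continuous_on_closed_Collect_le[OF cont]) auto
  have bdA: "bdd_above A" by (auto simp: A_def intro: bdd_aboveI2)
  define t where "t = Sup A"
  have tA: "t \<in> A" unfolding t_def using closed_contains_Sup zA bdA clA by blast
  have up: "s \<le> t" if "s \<in> A" for s using cSup_upper[OF that bdA] t_def by simp
  have tz: "z \<le> t" "t \<le> y" "\<phi> t \<le> 0" using tA by (auto simp: A_def)
  have "t < y" using tz pos by (metis order.not_eq_order_implies_strict not_less)
  have "\<phi> t = 0"
  proof (rule ccontr)
    assume "\<phi> t \<noteq> 0"
    then have "\<phi> t \<le> 0" "0 \<le> \<phi> y" using tz pos by auto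
    have c2: "continuous_on {t..y} \<phi>" using continuous_on_subset[OF cont, of "{t..y}"] tz by auto
    obtain s where s: "t \<le> s" "s \<le> y" "\<phi> s = 0"
      using IVT'[of \<phi> t 0 y, OF \<open>\<phi> t \<le> 0\<close> \<open>0 \<le> \<phi> y\<close> \<open>t \<le> y\<close> c2] by blast
    then have "s \<in> A" using tz by (auto simp: A_def)
    moreover have "s \<noteq> t" using s \<open>\<phi> t \<noteq> 0\<close> by auto
    ultimately show False using up s by fastforce
  qed
  then obtain d where d: "d < 0" "(\<phi> has_real_derivative d) (at t)" using der tz by auto
  from DERIV_neg_dec_right[OF d(2) d(1)] obtain e where e: "e > 0" "\<And>h. h > 0 \<Longrightarrow> h < e \<Longrightarrow> \<phi> t > \<phi> (t + h)"
    by auto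
  define h where "h = min (e/2) (y - t)"
  have h: "h > 0" "h < e" "t + h \<le> y" using e \<open>t < y\<close> by (auto simp: h_def)
  have "\<phi> (t + h) < 0" using e(2)[OF h(1,2)] \<open>\<phi> t = 0\<close> by simp
  then have "t + h \<in> A" using h tz by (auto simp: A_def)
  then show False using up h by fastforce
qed



definition prim :: "real \<Rightarrow> (real \<Rightarrow> real) \<Rightarrow> real \<Rightarrow> real" where
  "prim z0 f = (SOME F. F z0 = 0 \<and> (\<forall>x. (F has_real_derivative f x) (at x)))"

lemma prim_prop:
  assumes "continuous_on UNIV f"
  shows "prim z0 f z0 = 0 \<and> (\<forall>x. (prim z0 f has_real_derivative f x) (at x))"
proof -
  obtain F where F: "\<And>x::real. -\<infinity> < ereal x \<Longrightarrow> ereal x < \<infinity> \<Longrightarrow> (F has_vector_derivative f x) (at x)"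
    using einterval_antiderivative[of "-\<infinity>" "\<infinity>" f] assms
    by (auto simp: continuous_on_eq_continuous_at)
  have "\<forall>x. ((\<lambda>x. F x - F z0) has_real_derivative f x) (at x)"
    using F by (auto simp: has_real_derivative_iff_has_vector_derivative intro!: derivative_eq_intros)
  then have "\<exists>G. G z0 = 0 \<and> (\<forall>x. (G has_real_derivative f x) (at x))"
    by (intro exI[of _ "\<lambda>x. F x - F z0"]) auto
  then show ?thesis unfolding prim_def by (rule someI_ex)
qed

lemma deriv_pow_shift:
  "((\<lambda>s. K * (s - z0)^(Suc n) / Suc n) has_real_derivative K * (x - z0)^n) (at x)"
proof -
  have "((\<lambda>s. s - z0) has_real_derivative 1) (at x)" by (auto intro!: derivative_eq_intros)
  from DERIV_power[OF this, of "Suc n"]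
  have "((\<lambda>s. (s - z0)^(Suc n)) has_real_derivative (Suc n) * (x - z0)^n) (at x)" by simp
  from DERIV_cdivide[OF DERIV_cmult[OF this, of K], of "Suc n"]
  show ?thesis by (simp del: of_nat_Suc)
qed

lemma deriv_pow_shift2:
  "((\<lambda>s. - K * (z0 - s)^(Suc n) / Suc n) has_real_derivative K * (z0 - x)^n) (at x)"
proof -
  have "((\<lambda>s. z0 - s) has_real_derivative -1) (at x)" by (auto intro!: derivative_eq_intros)
  from DERIV_power[OF this, of "Suc n"]
  have "((\<lambda>s. (z0 - s)^(Suc n)) has_real_derivative of_nat (Suc n) * (-1 * (z0 - x)^(Suc n - Suc 0))) (at x)" .
  from DERIV_cdivide[OF DERIV_cmult[OF this, of "-K"], of "Suc n"]
  have "((\<lambda>s. - K * (z0 - s)^(Suc n) / Suc n) has_real_derivative (- K * (of_nat (Suc n) * (-1 * (z0 - x)^(Suc n - Suc 0)))) / Suc n) (at x)" .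
  moreover have "(- K * (of_nat (Suc n) * (-1 * (z0 - x)^(Suc n - Suc 0)))) / Suc n = K * (z0 - x)^n" by (simp del: of_nat_Suc)
  ultimately show ?thesis by simp
qed

lemma G1p:
  fixes f f' :: "real \<Rightarrow> real"
  assumes df: "\<And>x. (f has_real_derivative f' x) (at x)" and f0: "f z0 = 0"
    and K: "K \<ge> 0"
    and bd: "\<And>s. \<bar>s - z0\<bar> \<le> \<bar>z - z0\<bar> \<Longrightarrow> \<bar>f' s\<bar> \<le> K * \<bar>s - z0\<bar>^n"
  shows "\<bar>f z\<bar> \<le> K * \<bar>z - z0\<bar>^(Suc n) / Suc n"
proof (cases "z0 \<le> z")
  case True
  have "\<bar>f z - f z0\<bar> \<le> K * (z - z0)^(Suc n) / Suc n - K * (z0 - z0)^(Suc n) / Suc n"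
  proof (rule G1[OF True, where f'=f' and g'="\<lambda>s. K * (s - z0)^n"])
    show "((\<lambda>s. K * (s - z0)^(Suc n) / Suc n) has_real_derivative K * (x - z0)^n) (at x)" for x
      by (rule deriv_pow_shift)
    show "\<bar>f' x\<bar> \<le> K * (x - z0)^n" if "x \<in> {z0..z}" for x
      using bd[of x] that by auto
  qed (use df in auto)
  then show ?thesis using f0 True by simp
next
  case False
  have "\<bar>f z0 - f z\<bar> \<le> (- K * (z0 - z0)^(Suc n) / Suc n) - (- K * (z0 - z)^(Suc n) / Suc n)"
  proof (rule G1[where f'=f' and g'="\<lambda>s. K * (z0 - s)^n"])
    show "((\<lambda>s. - K * (z0 - s)^(Suc n) / Suc n) has_real_derivative K * (z0 - x)^n) (at x)" for x
      by (rule deriv_pow_shift2)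
    show "\<bar>f' x\<bar> \<le> K * (z0 - x)^n" if "x \<in> {z..z0}" for x
      using bd[of x] that by auto
  qed (use df False in auto)
  then show ?thesis using f0 False by simp
qed

primrec pic :: "(real\<Rightarrow>real) \<Rightarrow> real \<Rightarrow> real \<Rightarrow> real \<Rightarrow> nat \<Rightarrow> (real \<Rightarrow> real) \<times> (real \<Rightarrow> real)" where
  "pic V z0 a b 0 = (\<lambda>_. a, \<lambda>_. b)"
| "pic V z0 a b (Suc n) = (\<lambda>z. a + prim z0 (snd (pic V z0 a b n)) z,
                           \<lambda>z. b + prim z0 (\<lambda>s. V s * fst (pic V z0 a b n) s) z)"

lemma pic_props:
  assumes V: "continuous_on UNIV V"
  shows "continuous_on UNIV (fst (pic V z0 a b n)) \<and> continuous_on UNIV (snd (pic V z0 a b n))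
    \<and> fst (pic V z0 a b n) z0 = a \<and> snd (pic V z0 a b n) z0 = b
    \<and> (\<forall>x. (fst (pic V z0 a b (Suc n)) has_real_derivative snd (pic V z0 a b n) x) (at x))
    \<and> (\<forall>x. (snd (pic V z0 a b (Suc n)) has_real_derivative V x * fst (pic V z0 a b n) x) (at x))"
proof (induction n)
  case 0
  have p1: "prim z0 (\<lambda>_. b) z0 = 0 \<and> (\<forall>x. (prim z0 (\<lambda>_. b) has_real_derivative b) (at x))"
    using prim_prop[of "\<lambda>_. b"] by auto
  have p2: "prim z0 (\<lambda>s. V s * a) z0 = 0 \<and> (\<forall>x. (prim z0 (\<lambda>s. V s * a) has_real_derivative V x * a) (at x))"
    using prim_prop[of "\<lambda>s. V s * a" z0] V continuous_on_mult_right by blast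
  show ?case using p1 p2 by (auto intro!: derivative_eq_intros)
next
  case (Suc n)
  let ?w = "fst (pic V z0 a b n)" and ?v = "snd (pic V z0 a b n)"
  let ?w1 = "fst (pic V z0 a b (Suc n))" and ?v1 = "snd (pic V z0 a b (Suc n))"
  have c1: "continuous_on UNIV ?w1" "continuous_on UNIV ?v1"
    using Suc by (auto intro!: DERIV_continuous continuous_at_imp_continuous_on)
  have p1: "prim z0 ?v1 z0 = 0 \<and> (\<forall>x. (prim z0 ?v1 has_real_derivative ?v1 x) (at x))"
    using prim_prop c1 by blast
  have p2: "prim z0 (\<lambda>s. V s * ?w1 s) z0 = 0 \<and> (\<forall>x. (prim z0 (\<lambda>s. V s * ?w1 s) has_real_derivative V x * ?w1 x) (at x))"
    using prim_prop[of "\<lambda>s. V s * ?w1 s" z0] V c1 continuous_on_mult by blast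
  have q1: "prim z0 ?v z0 = 0" using prim_prop Suc by blast
  have q2: "prim z0 (\<lambda>s. V s * ?w s) z0 = 0"
    using prim_prop[of "\<lambda>s. V s * ?w s" z0] V Suc continuous_on_mult by blast
  have e1: "?w1 z0 = a" "?v1 z0 = b" using q1 q2 by auto
  have d1: "\<forall>x. ((\<lambda>z. a + prim z0 ?v1 z) has_real_derivative ?v1 x) (at x)"
    using p1 by (auto intro!: derivative_eq_intros)
  have d2: "\<forall>x. ((\<lambda>z. b + prim z0 (\<lambda>s. V s * ?w1 s) z) has_real_derivative V x * ?w1 x) (at x)"
    using p2 by (auto intro!: derivative_eq_intros)
  show ?case unfolding pic.simps(2)[of V z0 a b "Suc n"] fst_conv snd_conv
    using d1 d2 c1 e1 by blast
qed



lemma arith_step: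
  fixes C M T :: real
  assumes "C \<ge> 0" "M \<ge> 1" "T \<ge> 0"
  shows "C * M^n / fact n * T^(Suc n) / Suc n \<le> C * M^(Suc n) * T^(Suc n) / fact (Suc n)"
proof -
  have "C * M^n / fact n * T^(Suc n) / Suc n = C * M^n * T^(Suc n) / fact (Suc n)"
    by (simp add: fact_Suc field_simps del: of_nat_Suc)
  also have "\<dots> \<le> C * M^(Suc n) * T^(Suc n) / fact (Suc n)"
    using assms by (intro divide_right_mono mult_right_mono mult_left_mono) (auto simp: power_increasing)
  finally show ?thesis .
qed

lemma pic_bound:
  assumes V: "continuous_on UNIV V" and M: "M \<ge> 1" and R: "R \<ge> 0"
    and Vb: "\<And>s. \<bar>s - z0\<bar> \<le> R \<Longrightarrow> \<bar>V s\<bar> \<le> M"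
  shows "\<forall>s. \<bar>s - z0\<bar> \<le> R \<longrightarrow>
      \<bar>fst (pic V z0 a b (Suc n)) s - fst (pic V z0 a b n) s\<bar> \<le> M*R*(\<bar>a\<bar>+\<bar>b\<bar>) * M^n * \<bar>s - z0\<bar>^n / fact n
    \<and> \<bar>snd (pic V z0 a b (Suc n)) s - snd (pic V z0 a b n) s\<bar> \<le> M*R*(\<bar>a\<bar>+\<bar>b\<bar>) * M^n * \<bar>s - z0\<bar>^n / fact n"
proof (induction n)
  case 0
  let ?C = "M*R*(\<bar>a\<bar>+\<bar>b\<bar>)"
  have P: "\<And>n. fst (pic V z0 a b n) z0 = a \<and> snd (pic V z0 a b n) z0 = b
    \<and> (\<forall>x. (fst (pic V z0 a b (Suc n)) has_real_derivative snd (pic V z0 a b n) x) (at x))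
    \<and> (\<forall>x. (snd (pic V z0 a b (Suc n)) has_real_derivative V x * fst (pic V z0 a b n) x) (at x))"
    using pic_props[OF V] by blast
  show ?case
  proof (intro allI impI conjI)
    fix s assume s: "\<bar>s - z0\<bar> \<le> R"
    have "\<bar>fst (pic V z0 a b (Suc 0)) s - a\<bar> \<le> \<bar>b\<bar> * \<bar>s - z0\<bar>^(Suc 0) / Suc 0"
      by (rule G1p[where f'="\<lambda>x. b"]) (use P[of 0] P[of "Suc 0"] in \<open>auto intro!: derivative_eq_intros simp del: pic.simps(2)\<close>)
    also have "\<dots> \<le> ?C"
    proof -
      have "\<bar>b\<bar> * \<bar>s - z0\<bar> \<le> (\<bar>a\<bar>+\<bar>b\<bar>) * R" using s by (intro mult_mono) auto
      also have "\<dots> \<le> M * ((\<bar>a\<bar>+\<bar>b\<bar>) * R)" using M R mult_right_mono[of 1 M "(\<bar>a\<bar>+\<bar>b\<bar>) * R"] by simp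
      finally show ?thesis by (simp add: algebra_simps)
    qed
    finally show "\<bar>fst (pic V z0 a b (Suc 0)) s - fst (pic V z0 a b 0) s\<bar> \<le> ?C * M^0 * \<bar>s - z0\<bar>^0 / fact 0"
      by simp
    have "\<bar>snd (pic V z0 a b (Suc 0)) s - b\<bar> \<le> (M * \<bar>a\<bar>) * \<bar>s - z0\<bar>^(Suc 0) / Suc 0"
    proof (rule G1p[where f'="\<lambda>x. V x * a"])
      show "\<bar>V x * a\<bar> \<le> M * \<bar>a\<bar> * \<bar>x - z0\<bar> ^ 0" if "\<bar>x - z0\<bar> \<le> \<bar>s - z0\<bar>" for x
        using Vb[of x] that s by (simp add: abs_mult mult_right_mono)
    qed (use P[of 0] P[of "Suc 0"] M in \<open>auto intro!: derivative_eq_intros simp del: pic.simps(2)\<close>)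
    also have "\<dots> \<le> ?C"
    proof -
      have "\<bar>a\<bar> * \<bar>s - z0\<bar> \<le> (\<bar>a\<bar>+\<bar>b\<bar>) * R" using s by (intro mult_mono) auto
      then have "M * (\<bar>a\<bar> * \<bar>s - z0\<bar>) \<le> M * ((\<bar>a\<bar>+\<bar>b\<bar>) * R)" using M by (intro mult_left_mono) auto
      then show ?thesis by (simp add: algebra_simps)
    qed
    finally show "\<bar>snd (pic V z0 a b (Suc 0)) s - snd (pic V z0 a b 0) s\<bar> \<le> ?C * M^0 * \<bar>s - z0\<bar>^0 / fact 0"
      by simp
  qed
next
  case (Suc n)
  let ?C = "M*R*(\<bar>a\<bar>+\<bar>b\<bar>)"
  have C0: "?C \<ge> 0" using M R by auto
  have K0: "0 \<le> ?C * M^n / fact n" "0 \<le> M * (?C * M^n / fact n)" using C0 M by auto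
  have P: "\<And>n. fst (pic V z0 a b n) z0 = a \<and> snd (pic V z0 a b n) z0 = b
    \<and> (\<forall>x. (fst (pic V z0 a b (Suc n)) has_real_derivative snd (pic V z0 a b n) x) (at x))
    \<and> (\<forall>x. (snd (pic V z0 a b (Suc n)) has_real_derivative V x * fst (pic V z0 a b n) x) (at x))"
    using pic_props[OF V] by blast
  show ?case
  proof (intro allI impI conjI)
    fix s assume s: "\<bar>s - z0\<bar> \<le> R"
    have "\<bar>fst (pic V z0 a b (Suc (Suc n))) s - fst (pic V z0 a b (Suc n)) s\<bar>
        \<le> (?C * M^n / fact n) * \<bar>s - z0\<bar>^(Suc n) / Suc n"
    proof (rule G1p[where f'="\<lambda>x. snd (pic V z0 a b (Suc n)) x - snd (pic V z0 a b n) x"])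
      show "\<bar>snd (pic V z0 a b (Suc n)) x - snd (pic V z0 a b n) x\<bar> \<le> ?C * M^n / fact n * \<bar>x - z0\<bar>^n"
        if "\<bar>x - z0\<bar> \<le> \<bar>s - z0\<bar>" for x
        using Suc.IH that s by auto
    qed (use P[of n] P[of "Suc n"] P[of "Suc (Suc n)"] K0 in \<open>auto intro!: derivative_eq_intros simp del: pic.simps(2)\<close>)
    also have "\<dots> \<le> ?C * M^(Suc n) * \<bar>s - z0\<bar>^(Suc n) / fact (Suc n)"
      by (rule arith_step) (use C0 M in auto)
    finally show "\<bar>fst (pic V z0 a b (Suc (Suc n))) s - fst (pic V z0 a b (Suc n)) s\<bar>
        \<le> ?C * M^(Suc n) * \<bar>s - z0\<bar>^(Suc n) / fact (Suc n)" .
    have "\<bar>snd (pic V z0 a b (Suc (Suc n))) s - snd (pic V z0 a b (Suc n)) s\<bar>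
        \<le> (M * (?C * M^n / fact n)) * \<bar>s - z0\<bar>^(Suc n) / Suc n"
    proof (rule G1p[where f'="\<lambda>x. V x * (fst (pic V z0 a b (Suc n)) x - fst (pic V z0 a b n) x)"])
      show "\<bar>V x * (fst (pic V z0 a b (Suc n)) x - fst (pic V z0 a b n) x)\<bar> \<le> M * (?C * M^n / fact n) * \<bar>x - z0\<bar>^n"
        if "\<bar>x - z0\<bar> \<le> \<bar>s - z0\<bar>" for x
      proof -
        have "\<bar>fst (pic V z0 a b (Suc n)) x - fst (pic V z0 a b n) x\<bar> \<le> ?C * M^n * \<bar>x - z0\<bar>^n / fact n"
          using Suc.IH that s by auto
        moreover have "\<bar>V x\<bar> \<le> M" using Vb[of x] that s by auto
        ultimately have "\<bar>V x\<bar> * \<bar>fst (pic V z0 a b (Suc n)) x - fst (pic V z0 a b n) x\<bar> \<le> M * (?C * M^n * \<bar>x - z0\<bar>^n / fact n)"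
          by (intro mult_mono) auto
        then show ?thesis unfolding abs_mult by (simp add: algebra_simps del: pic.simps(2))
      qed
    qed (use P[of n] P[of "Suc n"] P[of "Suc (Suc n)"] K0 in \<open>auto intro!: derivative_eq_intros simp del: pic.simps(2) simp: algebra_simps\<close>)
    also have "\<dots> = ?C * M^(Suc n) * \<bar>s - z0\<bar>^(Suc n) / fact (Suc n)"
      by (simp add: fact_Suc field_simps del: of_nat_Suc)
    finally show "\<bar>snd (pic V z0 a b (Suc (Suc n))) s - snd (pic V z0 a b (Suc n)) s\<bar>
        \<le> ?C * M^(Suc n) * \<bar>s - z0\<bar>^(Suc n) / fact (Suc n)" .
  qed
qed



lemma UL:
  fixes f :: "nat \<Rightarrow> real \<Rightarrow> real"
  assumes bd: "\<And>n x. x \<in> S \<Longrightarrow> \<bar>f (Suc n) x - f n x\<bar> \<le> B n" and sm: "summable B"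
  shows "uniform_limit S f (\<lambda>x. lim (\<lambda>n. f n x)) sequentially"
proof -
  have U: "uniform_limit S (\<lambda>N x. \<Sum>i<N. (f (Suc i) x - f i x)) (\<lambda>x. suminf (\<lambda>i. f (Suc i) x - f i x)) sequentially"
    by (rule Weierstrass_m_test[OF _ sm]) (use bd in auto)
  have tel: "(\<Sum>i<n. f (Suc i) x - f i x) = f n x - f 0 x" for n x by (induction n) auto
  let ?L = "\<lambda>x. suminf (\<lambda>i. f (Suc i) x - f i x) + f 0 x"
  have U2: "uniform_limit S f ?L sequentially"
  proof (rule uniform_limitI)
    fix e :: real assume "e > 0"
    from uniform_limitD[OF U this]
    show "\<forall>\<^sub>F n in sequentially. \<forall>x\<in>S. dist (f n x) (?L x) < e"
      by eventually_elim (auto simp: tel dist_real_def)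
  qed
  have "lim (\<lambda>n. f n x) = ?L x" if "x \<in> S" for x
    using tendsto_uniform_limitI[OF U2 that] by (rule limI)
  then show ?thesis using U2 uniform_limit_cong'[of S f f "\<lambda>x. lim (\<lambda>n. f n x)" ?L] by auto
qed

lemma ode_local:
  fixes z0 a b R :: real
  assumes V: "continuous_on UNIV V" and R: "R > 0"
  defines "W \<equiv> \<lambda>x. lim (\<lambda>n. fst (pic V z0 a b n) x)"
    and "W1 \<equiv> \<lambda>x. lim (\<lambda>n. snd (pic V z0 a b n) x)"
  shows "\<And>x. \<bar>x - z0\<bar> < R \<Longrightarrow> (W has_real_derivative W1 x) (at x) \<and> (W1 has_real_derivative V x * W x) (at x)"
proof -
  define S where "S = {z0-R..z0+R}"
  have cS: "compact S" "convex S" "z0 \<in> S" using R by (auto simp: S_def)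
  have "bounded (V ` S)"
    using compact_continuous_image[OF continuous_on_subset[OF V] cS(1)] compact_imp_bounded by auto
  then obtain M0 where M0: "\<And>s. s \<in> S \<Longrightarrow> \<bar>V s\<bar> \<le> M0" by (auto simp: bounded_iff)
  define M where "M = max 1 M0"
  have M: "M \<ge> 1" "\<And>s. \<bar>s - z0\<bar> \<le> R \<Longrightarrow> \<bar>V s\<bar> \<le> M"
    using M0 by (auto simp: M_def S_def abs_le_iff intro: order.trans[OF _ max.cobounded2])
  define C where "C = M*R*(\<bar>a\<bar>+\<bar>b\<bar>)"
  have C: "C \<ge> 0" using M R by (auto simp: C_def)
  have PB: "\<forall>s. \<bar>s - z0\<bar> \<le> R \<longrightarrow>
      \<bar>fst (pic V z0 a b (Suc n)) s - fst (pic V z0 a b n) s\<bar> \<le> C * M^n * \<bar>s - z0\<bar>^n / fact n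
    \<and> \<bar>snd (pic V z0 a b (Suc n)) s - snd (pic V z0 a b n) s\<bar> \<le> C * M^n * \<bar>s - z0\<bar>^n / fact n" for n
    unfolding C_def by (rule pic_bound[OF V M(1) less_imp_le[OF R] M(2)])
  have PB2: "C * M^n * \<bar>s - z0\<bar>^n / fact n \<le> C * (inverse (fact n) * (M*R)^n)" if "s \<in> S" for s n
  proof -
    have "\<bar>s - z0\<bar>^n \<le> R^n" using that by (auto simp: S_def intro!: power_mono)
    then have "C * M^n * \<bar>s - z0\<bar>^n \<le> C * M^n * R^n" using C M by (intro mult_left_mono) auto
    then show ?thesis by (simp add: divide_right_mono power_mult_distrib field_simps)
  qed
  have sm: "summable (\<lambda>n. C * (inverse (fact n) * (M*R)^n))"
    by (intro summable_mult summable_exp)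
  have inS: "\<bar>s - z0\<bar> \<le> R" if "s \<in> S" for s using that by (auto simp: S_def)
  have U1: "uniform_limit S (\<lambda>n. fst (pic V z0 a b n)) W sequentially"
    unfolding W_def
    by (rule UL[OF _ sm]) (use PB PB2 inS in \<open>blast intro: order.trans\<close>)
  have U2: "uniform_limit S (\<lambda>n. snd (pic V z0 a b n)) W1 sequentially"
    unfolding W1_def
    by (rule UL[OF _ sm]) (use PB PB2 inS in \<open>blast intro: order.trans\<close>)
  have P: "\<And>n. fst (pic V z0 a b n) z0 = a \<and> snd (pic V z0 a b n) z0 = b
    \<and> (\<forall>x. (fst (pic V z0 a b (Suc n)) has_real_derivative snd (pic V z0 a b n) x) (at x))
    \<and> (\<forall>x. (snd (pic V z0 a b (Suc n)) has_real_derivative V x * fst (pic V z0 a b n) x) (at x))"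
    using pic_props[OF V] by blast
  have limW: "(\<lambda>n. fst (pic V z0 a b (Suc n)) x) \<longlonglongrightarrow> W x" if "x \<in> S" for x
    using tendsto_uniform_limitI[OF U1 that] by (rule LIMSEQ_Suc)
  have limW1: "(\<lambda>n. snd (pic V z0 a b (Suc n)) x) \<longlonglongrightarrow> W1 x" if "x \<in> S" for x
    using tendsto_uniform_limitI[OF U2 that] by (rule LIMSEQ_Suc)
  obtain g where g: "\<forall>x\<in>S. (\<lambda>n. fst (pic V z0 a b (Suc n)) x) \<longlonglongrightarrow> g x \<and> (g has_derivative (*) (W1 x)) (at x within S)"
  proof -
    have "\<exists>g. \<forall>x\<in>S. (\<lambda>n. fst (pic V z0 a b (Suc n)) x) \<longlonglongrightarrow> g x \<and> (g has_derivative (*) (W1 x)) (at x within S)"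
    proof (rule has_derivative_sequence[OF cS(2) _ _ cS(3)])
      show "((fst (pic V z0 a b (Suc n))) has_derivative (*) (snd (pic V z0 a b n) x)) (at x within S)" for n x
        using P[of n] by (auto simp: has_field_derivative_def intro: has_derivative_at_withinI)
      show "\<forall>\<^sub>F n in sequentially. \<forall>x\<in>S. \<forall>h. norm (snd (pic V z0 a b n) x * h - W1 x * h) \<le> e * norm h"
        if "e > 0" for e
        using uniform_limitD[OF U2 that]
      proof eventually_elim
        case (elim n)
        show ?case
        proof (intro ballI allI)
          fix x h assume "x \<in> S"
          then have "\<bar>snd (pic V z0 a b n) x - W1 x\<bar> \<le> e" using elim by (auto simp: dist_real_def)
          then have "\<bar>snd (pic V z0 a b n) x - W1 x\<bar> * \<bar>h\<bar> \<le> e * \<bar>h\<bar>" by (rule mult_right_mono) auto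
          then show "norm (snd (pic V z0 a b n) x * h - W1 x * h) \<le> e * norm h"
            by (simp add: left_diff_distrib[symmetric] abs_mult)
        qed
      qed
      show "(\<lambda>n. fst (pic V z0 a b (Suc n)) z0) \<longlonglongrightarrow> a" using P by (simp del: pic.simps(2))
    qed
    then show ?thesis using that by blast
  qed
  obtain g1 where g1: "\<forall>x\<in>S. (\<lambda>n. snd (pic V z0 a b (Suc n)) x) \<longlonglongrightarrow> g1 x \<and> (g1 has_derivative (*) (V x * W x)) (at x within S)"
  proof -
    have "\<exists>g. \<forall>x\<in>S. (\<lambda>n. snd (pic V z0 a b (Suc n)) x) \<longlonglongrightarrow> g x \<and> (g has_derivative (*) (V x * W x)) (at x within S)"
    proof (rule has_derivative_sequence[OF cS(2) _ _ cS(3)])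
      show "((snd (pic V z0 a b (Suc n))) has_derivative (*) (V x * fst (pic V z0 a b n) x)) (at x within S)" for n x
        using P[of n] by (auto simp: has_field_derivative_def intro: has_derivative_at_withinI)
      show "\<forall>\<^sub>F n in sequentially. \<forall>x\<in>S. \<forall>h. norm (V x * fst (pic V z0 a b n) x * h - V x * W x * h) \<le> e * norm h"
        if "e > 0" for e
      proof -
        have "e / M > 0" using that M(1) by auto
        from uniform_limitD[OF U1 this]
        show ?thesis
      proof eventually_elim
        case (elim n)
        show ?case
        proof (intro ballI allI)
          fix x h assume x: "x \<in> S"
          then have d: "\<bar>fst (pic V z0 a b n) x - W x\<bar> \<le> e / M" using elim by (auto simp: dist_real_def)
          have "\<bar>V x\<bar> * \<bar>fst (pic V z0 a b n) x - W x\<bar> \<le> M * (e / M)"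
            using M(2)[OF inS[OF x]] d by (intro mult_mono) auto
          also have "\<dots> = e" using M(1) by simp
          finally have "\<bar>V x\<bar> * \<bar>fst (pic V z0 a b n) x - W x\<bar> * \<bar>h\<bar> \<le> e * \<bar>h\<bar>" by (rule mult_right_mono) auto
          then show "norm (V x * fst (pic V z0 a b n) x * h - V x * W x * h) \<le> e * norm h"
            by (simp add: left_diff_distrib[symmetric] right_diff_distrib[symmetric] abs_mult)
        qed
      qed
      qed
      show "(\<lambda>n. snd (pic V z0 a b (Suc n)) z0) \<longlonglongrightarrow> b" using P by (simp del: pic.simps(2))
    qed
    then show ?thesis using that by blast
  qed
  have gW: "g x = W x" if "x \<in> S" for x using g limW that LIMSEQ_unique by blast
  have g1W: "g1 x = W1 x" if "x \<in> S" for x using g1 limW1 that LIMSEQ_unique by blast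
  fix x assume x: "\<bar>x - z0\<bar> < R"
  then have xS: "x \<in> S" and atx: "at x within S = at x" by (auto simp: S_def intro!: at_within_Icc_at)
  have o: "open {z0-R<..<z0+R}" "x \<in> {z0-R<..<z0+R}" "{z0-R<..<z0+R} \<subseteq> S" using x by (auto simp: S_def)
  have "(g has_real_derivative W1 x) (at x)" using g xS atx by (auto simp: has_field_derivative_def mult.commute)
  then have d1: "(W has_real_derivative W1 x) (at x)"
    by (rule has_field_derivative_transform_within_open[OF _ o(1,2)]) (use gW o(3) in auto)
  have "(g1 has_real_derivative V x * W x) (at x)" using g1 xS atx by (auto simp: has_field_derivative_def mult.commute)
  then have d2: "(W1 has_real_derivative V x * W x) (at x)"
    by (rule has_field_derivative_transform_within_open[OF _ o(1,2)]) (use g1W o(3) in auto)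
  show "(W has_real_derivative W1 x) (at x) \<and> (W1 has_real_derivative V x * W x) (at x)" using d1 d2 by blast
qed

lemma ode_exists:
  assumes V: "continuous_on UNIV V"
  shows "\<exists>w w1. w z0 = a \<and> w1 z0 = b \<and> (\<forall>x. (w has_real_derivative w1 x) (at x))
     \<and> (\<forall>x. (w1 has_real_derivative V x * w x) (at x))"
proof -
  define W where "W \<equiv> \<lambda>x. lim (\<lambda>n. fst (pic V z0 a b n) x)"
  define W1 where "W1 \<equiv> \<lambda>x. lim (\<lambda>n. snd (pic V z0 a b n) x)"
  have P: "\<And>n. fst (pic V z0 a b n) z0 = a \<and> snd (pic V z0 a b n) z0 = b"
    using pic_props[OF V] by blast
  have "W z0 = a" "W1 z0 = b" using P by (auto simp: W_def W1_def)
  moreover have "(W has_real_derivative W1 x) (at x) \<and> (W1 has_real_derivative V x * W x) (at x)" for x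
    using ode_local[OF V, of "\<bar>x - z0\<bar> + 1" x z0 a b] unfolding W_def W1_def by auto
  ultimately show ?thesis by blast
qed



definition Hf :: "real \<Rightarrow> real \<Rightarrow> real \<Rightarrow> real \<Rightarrow> real \<Rightarrow> real \<Rightarrow> real" where
  "Hf K gm z1 a b x = -(K/gm) * exp(-gm*x) * (a + b*(x - z1)) - (K*b/gm^2) * exp(-gm*x)"

definition Jf :: "real \<Rightarrow> real \<Rightarrow> real \<Rightarrow> real \<Rightarrow> real \<Rightarrow> real \<Rightarrow> real" where
  "Jf K gm z1 a b x = -(K/gm^2) * exp(-gm*x) * (a + b*(x - z1)) - (2*K*b/gm^3) * exp(-gm*x)"

lemma Hf_deriv:
  assumes "gm > 0"
  shows "(Hf K gm z1 a b has_real_derivative K * exp(-gm*x) * (a + b*(x - z1))) (at x)"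
  unfolding Hf_def
  by (rule derivative_eq_intros refl | simp)+ (use assms in \<open>simp add: field_simps power2_eq_square\<close>)

lemma Jf_deriv:
  assumes "gm > 0"
  shows "(Jf K gm z1 a b has_real_derivative - Hf K gm z1 a b x) (at x)"
  unfolding Jf_def Hf_def
  by (rule derivative_eq_intros refl | simp)+ (use assms in \<open>simp add: field_simps power2_eq_square power3_eq_cube\<close>)

lemma Hf_lim: "gm > 0 \<Longrightarrow> (Hf K gm z1 a b \<longlongrightarrow> 0) at_top"
  unfolding Hf_def by real_asymp

lemma Jf_lim: "gm > 0 \<Longrightarrow> (Jf K gm z1 a b \<longlongrightarrow> 0) at_top"
  unfolding Jf_def by real_asymp

lemma PB:
  fixes w w1 V :: "real \<Rightarrow> real"
  assumes dw: "\<And>x. (w has_real_derivative w1 x) (at x)"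
    and dw1: "\<And>x. (w1 has_real_derivative V x * w x) (at x)"
    and K: "K \<ge> 0" and gm: "gm > 0"
    and Vb: "\<And>s. s \<ge> s0 \<Longrightarrow> \<bar>V s\<bar> \<le> K * exp(-gm * s)"
  shows "\<exists>A B. (w1 \<longlongrightarrow> B) at_top \<and> ((\<lambda>z. w z - B*z) \<longlongrightarrow> A) at_top \<and>
     (A = 0 \<and> B = 0 \<longrightarrow> (\<forall>\<^sub>F z in at_top. w z = 0 \<and> w1 z = 0))"
proof -
  have "((\<lambda>z. K*exp(-gm*z)) \<longlongrightarrow> 0) at_top" using gm by real_asymp
  then have ev: "\<forall>\<^sub>F z in at_top. K*exp(-gm*z) < gm^2/2" using gm by (intro order_tendstoD) auto
  obtain z1 where z1: "z1 \<ge> s0" "K*exp(-gm*z1) \<le> gm^2/2"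
    using eventually_conj[OF ev eventually_ge_at_top[of s0]] by (auto simp: eventually_at_top_linorder)
  define \<epsilon>1 where "\<epsilon>1 = K*exp(-gm*z1)"
  have e1: "\<epsilon>1 \<ge> 0" "\<epsilon>1 \<le> gm^2/2" using z1 K by (auto simp: \<epsilon>1_def)
  define m where "m = \<bar>w z1\<bar>"
  define m1 where "m1 = \<bar>w1 z1\<bar>"
  define D where "D = 2*(m1 + \<epsilon>1*m/gm)"
  have m0: "m \<ge> 0" "m1 \<ge> 0" by (auto simp: m_def m1_def)
  have cw1: "continuous_on A w1" for A using dw1 by (auto intro!: DERIV_continuous continuous_at_imp_continuous_on)
  have Vb2: "\<bar>V x * w x\<bar> \<le> K * exp(-gm*x) * (m + F*(x - z1))" if "x \<ge> z1" "\<bar>w x\<bar> \<le> m + F*(x - z1)" for x F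
    unfolding abs_mult using Vb[of x] that z1 by (intro mult_mono) auto
  have wgrow: "\<bar>w x\<bar> \<le> m + F*(x - z1)" if "z1 \<le> x" "\<And>y. y \<in> {z1..x} \<Longrightarrow> \<bar>w1 y\<bar> \<le> F" for x F
  proof -
    have "\<bar>w x - w z1\<bar> \<le> F*x - F*z1"
      by (rule G1[OF that(1), where f'=w1 and g'="\<lambda>_. F"]) (use dw that(2) in \<open>auto intro!: derivative_eq_intros\<close>)
    then show ?thesis unfolding m_def by (auto simp: algebra_simps)
  qed
  have Hle: "Hf K gm z1 a b x \<le> 0" if "a \<ge> 0" "b \<ge> 0" "x \<ge> z1" for a b x
  proof -
    have "0 \<le> (K/gm) * exp(-gm*x) * (a + b*(x - z1))" using that K gm by auto
    moreover have "0 \<le> (K*b/gm^2) * exp(-gm*x)" using that K gm by auto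
    ultimately show ?thesis unfolding Hf_def by linarith
  qed
  have Hz1: "- Hf K gm z1 a b z1 = \<epsilon>1 * a/gm + \<epsilon>1 * b / gm^2" for a b
    unfolding Hf_def \<epsilon>1_def by (simp add: field_simps)
  have w1D: "\<bar>w1 z\<bar> \<le> D" if zz: "z \<ge> z1" for z
  proof -
    obtain t where t: "t \<in> {z1..z}" "\<And>y. y \<in> {z1..z} \<Longrightarrow> \<bar>w1 y\<bar> \<le> \<bar>w1 t\<bar>"
    proof -
      have "continuous_on {z1..z} (\<lambda>y. \<bar>w1 y\<bar>)" by (intro continuous_intros cw1)
      then have "\<exists>x\<in>{z1..z}. \<forall>y\<in>{z1..z}. \<bar>w1 y\<bar> \<le> \<bar>w1 x\<bar>"
        using continuous_attains_sup[of "{z1..z}" "\<lambda>y. \<bar>w1 y\<bar>"] zz by auto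
      then show ?thesis using that by blast
    qed
    define F where "F = \<bar>w1 t\<bar>"
    have F0: "F \<ge> 0" by (simp add: F_def)
    have "\<bar>w1 t - w1 z1\<bar> \<le> Hf K gm z1 m F t - Hf K gm z1 m F z1"
    proof (rule G1[where f'="\<lambda>x. V x * w x" and g'="\<lambda>x. K * exp(-gm*x) * (m + F*(x - z1))"])
      show "z1 \<le> t" using t by auto
      show "((Hf K gm z1 m F) has_real_derivative K * exp(-gm*x) * (m + F*(x - z1))) (at x)" for x
        by (rule Hf_deriv[OF gm])
      show "\<bar>V x * w x\<bar> \<le> K * exp(-gm*x) * (m + F*(x - z1))" if "x \<in> {z1..t}" for x
        using that t by (intro Vb2 wgrow) (auto simp: F_def)
    qed (use dw1 in auto)
    also have "\<dots> \<le> \<epsilon>1 * m/gm + \<epsilon>1 * F / gm^2" using Hz1[of m F] Hle[of m F t] m0 F0 t by auto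
    also have "\<epsilon>1 * F / gm^2 \<le> F/2"
    proof -
      have "\<epsilon>1 * F \<le> (gm^2/2) * F" using e1 F0 by (intro mult_right_mono) auto
      then have "\<epsilon>1 * F / gm^2 \<le> (gm^2/2) * F / gm^2" using gm by (intro divide_right_mono) auto
      then show ?thesis using gm by simp
    qed
    finally have "F \<le> m1 + \<epsilon>1 * m/gm + F/2" unfolding m1_def F_def by auto
    then have "F \<le> D" unfolding D_def by auto
    then show ?thesis using t(2)[of z] zz by (auto simp: F_def)
  qed
  have D0: "D \<ge> 0" using e1 m0 gm by (auto simp: D_def)
  have wD: "\<bar>w x\<bar> \<le> m + D*(x - z1)" if "x \<ge> z1" for x
    using that by (intro wgrow w1D) auto
  obtain B where B: "(w1 \<longlongrightarrow> B) at_top" "\<And>x. x \<ge> z1 \<Longrightarrow> \<bar>B - w1 x\<bar> \<le> 0 - Hf K gm z1 m D x"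
    using L1[where f=w1 and f'="\<lambda>x. V x * w x" and g="Hf K gm z1 m D" and a=z1
        and g'="\<lambda>x. K * exp(-gm*x) * (m + D*(x - z1))", OF dw1 Hf_deriv[OF gm] Vb2[OF _ wD] Hf_lim[OF gm]]
    by blast
  obtain A where A: "((\<lambda>z. w z - B*z) \<longlongrightarrow> A) at_top" "\<And>x. x \<ge> z1 \<Longrightarrow> \<bar>A - (w x - B*x)\<bar> \<le> 0 - Jf K gm z1 m D x"
  proof -
    have "\<exists>Lf. ((\<lambda>z. w z - B*z) \<longlongrightarrow> Lf) at_top \<and> (\<forall>x\<ge>z1. \<bar>Lf - (w x - B*x)\<bar> \<le> 0 - Jf K gm z1 m D x)"
    proof (rule L1[where f'="\<lambda>x. w1 x - B" and g'="\<lambda>x. - Hf K gm z1 m D x"])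
      show "((\<lambda>z. w z - B*z) has_real_derivative w1 x - B) (at x)" for x
        using dw[of x] by (auto intro!: derivative_eq_intros)
      show "(Jf K gm z1 m D has_real_derivative - Hf K gm z1 m D x) (at x)" for x by (rule Jf_deriv[OF gm])
      show "\<bar>w1 x - B\<bar> \<le> - Hf K gm z1 m D x" if "x \<ge> z1" for x using B(2)[OF that] by auto
    qed (rule Jf_lim[OF gm])
    then show ?thesis using that by blast
  qed
  have tail: "\<forall>\<^sub>F z in at_top. w z = 0 \<and> w1 z = 0" if AB: "A = 0" "B = 0"
  proof -
    have Jmono: "Jf K gm z1 m D z1 \<le> Jf K gm z1 m D x" if "x \<ge> z1" for x
      by (rule deriv_nonneg_imp_mono[OF Jf_deriv[OF gm]]) (use Hle m0 D0 that in auto)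
    have wJ: "\<bar>w x\<bar> \<le> - Jf K gm z1 m D z1" if "x \<ge> z1" for x
      using A(2)[OF that] AB Jmono[OF that] by auto
    define N where "N = Sup ((\<lambda>x. \<bar>w x\<bar>) ` {z1..})"
    have bdd: "bdd_above ((\<lambda>x. \<bar>w x\<bar>) ` {z1..})" using wJ by (auto simp: bdd_above_def)
    have wN: "\<bar>w x\<bar> \<le> N" if "x \<ge> z1" for x
      unfolding N_def using that bdd by (intro cSUP_upper) auto
    have N0: "N \<ge> 0" using wN[of z1] by auto
    have wlim: "(w \<longlongrightarrow> 0) at_top"
    proof -
      have "((\<lambda>z. w z - B*z) \<longlongrightarrow> 0) at_top" using A(1) AB by simp
      then show ?thesis using AB by simp
    qed
    obtain L where L: "(w1 \<longlongrightarrow> L) at_top" "\<And>x. x \<ge> z1 \<Longrightarrow> \<bar>L - w1 x\<bar> \<le> 0 - (- (K*N/gm) * exp(-gm*x))"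
    proof -
      have "\<exists>Lf. (w1 \<longlongrightarrow> Lf) at_top \<and> (\<forall>x\<ge>z1. \<bar>Lf - w1 x\<bar> \<le> 0 - (- (K*N/gm) * exp(-gm*x)))"
      proof (rule L1[where f'="\<lambda>x. V x * w x" and g'="\<lambda>x. K*N * exp(-gm*x)"])
        show "((\<lambda>x. - (K*N/gm) * exp(-gm*x)) has_real_derivative K*N * exp(-gm*x)) (at x)" for x
          using gm by (auto intro!: derivative_eq_intros)
        show "\<bar>V x * w x\<bar> \<le> K*N * exp(-gm*x)" if "x \<ge> z1" for x
        proof -
          have "\<bar>V x\<bar> * \<bar>w x\<bar> \<le> (K * exp(-gm*x)) * N" using Vb[of x] wN[OF that] that z1 by (intro mult_mono) auto
          then show ?thesis unfolding abs_mult by (simp add: algebra_simps)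
        qed
        show "((\<lambda>x. - (K*N/gm) * exp(-gm*x)) \<longlongrightarrow> 0) at_top" using gm by real_asymp
      qed (use dw1 in auto)
      then show ?thesis using that by blast
    qed
    have L0: "L = 0" using tendsto_unique[OF _ L(1) B(1)[unfolded AB]] by simp
    have w1b: "\<bar>w1 x\<bar> \<le> (K*N/gm) * exp(-gm*x)" if "x \<ge> z1" for x using L(2)[OF that] L0 by simp
    obtain L' where L': "(w \<longlongrightarrow> L') at_top" "\<And>x. x \<ge> z1 \<Longrightarrow> \<bar>L' - w x\<bar> \<le> 0 - (- (K*N/gm^2) * exp(-gm*x))"
    proof -
      have "\<exists>Lf. (w \<longlongrightarrow> Lf) at_top \<and> (\<forall>x\<ge>z1. \<bar>Lf - w x\<bar> \<le> 0 - (- (K*N/gm^2) * exp(-gm*x)))"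
      proof (rule L1[where f'="w1" and g'="\<lambda>x. (K*N/gm) * exp(-gm*x)"])
        show "((\<lambda>x. - (K*N/gm^2) * exp(-gm*x)) has_real_derivative (K*N/gm) * exp(-gm*x)) (at x)" for x
          using gm by (auto intro!: derivative_eq_intros simp: power2_eq_square)
        show "((\<lambda>x. - (K*N/gm^2) * exp(-gm*x)) \<longlongrightarrow> 0) at_top" using gm by real_asymp
      qed (use dw w1b in auto)
      then show ?thesis using that by blast
    qed
    have L'0: "L' = 0" using tendsto_unique[OF _ L'(1) wlim] by simp
    have wb: "\<bar>w x\<bar> \<le> N/2" if "x \<ge> z1" for x
    proof -
      have "\<bar>w x\<bar> \<le> (K*N/gm^2) * exp(-gm*x)" using L'(2)[OF that] L'0 by simp
      also have "\<dots> \<le> (K*N/gm^2) * exp(-gm*z1)" using that gm K N0 by (intro mult_left_mono) auto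
      also have "\<dots> = \<epsilon>1 * N / gm^2" by (simp add: \<epsilon>1_def)
      also have "\<dots> \<le> (gm^2/2) * N / gm^2" using e1 N0 gm by (intro divide_right_mono mult_right_mono) auto
      also have "\<dots> = N/2" using gm by simp
      finally show ?thesis .
    qed
    have "N \<le> N/2" unfolding N_def[of] by (subst N_def[symmetric], rule cSUP_least) (use wb in auto)
    then have N00: "N = 0" using N0 by auto
    show ?thesis unfolding eventually_at_top_linorder
      by (rule exI[of _ z1]) (use wN w1b N00 in auto)
  qed
  show ?thesis using A B tail by blast
qed



lemma ineq1:
  fixes d c e U P :: real
  assumes d: "d > 0" and c: "c > 0" and e: "e > 0" and ec: "e * (1 + c^2/d) \<le> c/2" and U: "\<bar>U\<bar> \<le> 1/2"
  shows "-(c-e)*P^2 - (e*c/d)*U*P - (e/d)*U^2*(1-U) \<le> -(c/2)*P^2 - (e/(4*d))*U^2"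
proof -
  have ed: "e/d > 0" using d e by auto
  have h1: "-(c*U*P) \<le> U^2/4 + c^2*P^2"
    using sum_squares_ge_zero[of "U/2 + c*P" 0] by (simp add: power2_eq_square algebra_simps) 
  have h2: "U^2/2 \<le> U^2*(1-U)"
  proof -
    have "1/2 \<le> 1 - U" using U by auto
    then show ?thesis using mult_left_mono[of "1/2" "1-U" "U^2"] by simp
  qed
  have h1': "(e/d)*(-(c*U*P)) \<le> (e/d)*(U^2/4 + c^2*P^2)" by (metis mult_left_mono h1 ed less_imp_le)
  have h2': "(e/d)*(U^2/2) \<le> (e/d)*(U^2*(1-U))" by (metis mult_left_mono h2 ed less_imp_le)
  have h3: "(e + (e/d)*c^2)*P^2 \<le> (c/2)*P^2"
    using mult_right_mono[OF ec, of "P^2"] by (simp add: algebra_simps)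
  have "-(c-e)*P^2 - (e*c/d)*U*P - (e/d)*U^2*(1-U)
      = -c*P^2 + e*P^2 + (e/d)*(-(c*U*P)) - (e/d)*(U^2*(1-U))" using d by (simp add: field_simps)
  also have "\<dots> \<le> -c*P^2 + e*P^2 + (e/d)*(U^2/4 + c^2*P^2) - (e/d)*(U^2/2)" by (intro diff_mono add_left_mono h1' h2')
  also have "\<dots> = -c*P^2 + (e + (e/d)*c^2)*P^2 - (e/(4*d))*U^2" by (simp add: algebra_simps)
  also have "\<dots> \<le> -c*P^2 + (c/2)*P^2 - (e/(4*d))*U^2" by (intro diff_right_mono add_left_mono h3)
  finally show ?thesis by (simp add: algebra_simps)
qed

lemma ineq2:
  fixes d e U P :: real
  assumes d: "d > 0" and e: "e > 0" and e2: "e^2 \<le> d/6" and U: "\<bar>U\<bar> \<le> 1/2"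
  shows "d*P^2/2 + U^2/2 - U^3/3 + e*U*P \<le> d*P^2 + U^2"
    and "U^2/6 \<le> d*P^2/2 + U^2/2 - U^3/3 + e*U*P"
proof -
  have c1: "\<bar>U^3\<bar> \<le> U^2/2"
  proof -
    have "\<bar>U^3\<bar> = \<bar>U\<bar> * U^2" by (simp add: power3_eq_cube power2_eq_square abs_mult)
    also have "\<dots> \<le> (1/2) * U^2" using U by (intro mult_right_mono) auto
    finally show ?thesis by simp
  qed
  have c2: "\<bar>e*U*P\<bar> \<le> d*P^2/4 + (e^2/d)*U^2"
  proof -
    have "0 \<le> (d*\<bar>P\<bar>/2 - e*\<bar>U\<bar>)^2" by simp
    also have "\<dots> = d*(d*P^2/4) - d*(e*\<bar>U\<bar>*\<bar>P\<bar>) + e^2*U^2"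
      by (simp add: power2_eq_square algebra_simps)
    finally have "d*(e*\<bar>U\<bar>*\<bar>P\<bar>) \<le> d*(d*P^2/4 + (e^2/d)*U^2)"
      using d by (simp add: algebra_simps)
    then have "e*\<bar>U\<bar>*\<bar>P\<bar> \<le> d*P^2/4 + (e^2/d)*U^2" using d by (simp add: mult_le_cancel_left_pos)
    then show ?thesis using e by (simp add: abs_mult)
  qed
  have c3: "(e^2/d)*U^2 \<le> U^2/6"
  proof -
    have "e^2/d \<le> 1/6" using e2 d by (simp add: divide_simps)
    then show ?thesis using mult_right_mono[of "e^2/d" "1/6" "U^2"] by simp
  qed
  have "0 \<le> d*P^2" using d by simp
  moreover have "U^3 \<le> U^2/2" "-(U^2/2) \<le> U^3" using c1 by (auto simp: abs_le_iff)
  moreover have "e*U*P \<le> d*P^2/4 + (e^2/d)*U^2" "-(e*U*P) \<le> d*P^2/4 + (e^2/d)*U^2" using c2 by (auto simp: abs_le_iff)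
  ultimately show "d*P^2/2 + U^2/2 - U^3/3 + e*U*P \<le> d*P^2 + U^2"
    and "U^2/6 \<le> d*P^2/2 + U^2/2 - U^3/3 + e*U*P" using c3 by linarith+
qed

lemma LY:
  fixes u du :: "real \<Rightarrow> real" and d c :: real
  assumes d: "d > 0" and c: "c > 0"
    and du: "\<And>x. (u has_real_derivative du x) (at x)"
    and ddu: "\<And>x. (du has_real_derivative (- (c * du x + u x * (1 - u x)) / d)) (at x)"
    and lim: "(u \<longlongrightarrow> 0) at_top"
  shows "\<exists>K gm s0. K \<ge> 0 \<and> gm > 0 \<and> (\<forall>s\<ge>s0. \<bar>u s\<bar> \<le> K * exp(-gm * s))"
proof -
  have "((\<lambda>x. \<bar>u x\<bar>) \<longlongrightarrow> \<bar>0\<bar>) at_top" using lim by (rule tendsto_rabs)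
  then have "\<forall>\<^sub>F x in at_top. \<bar>u x\<bar> < 1/2" by (intro order_tendstoD(2)) auto
  then obtain s0 where s0: "\<And>s. s \<ge> s0 \<Longrightarrow> \<bar>u s\<bar> \<le> 1/2"
    by (auto simp: eventually_at_top_linorder) (meson less_imp_le)
  define e where "e = min (c/(2 + 2*c^2/d)) (min 1 (d/6))"
  have "2 + 2*c^2/d > 0" using d by (simp add: add_pos_nonneg)
  then have e0: "e > 0" using c d by (auto simp: e_def)
  have ec: "e * (1 + c^2/d) \<le> c/2"
  proof -
    have p: "2 + 2*c^2/d > 0" using d by (simp add: add_pos_nonneg)
    have "e \<le> c/(2 + 2*c^2/d)" by (simp add: e_def)
    then have "e * (2 + 2*c^2/d) \<le> c" using p by (simp add: pos_le_divide_eq)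
    then show ?thesis by (simp add: algebra_simps)
  qed
  have e2: "e^2 \<le> d/6"
  proof -
    have "e \<le> 1" "e \<le> d/6" unfolding e_def by linarith+
    then have "e*e \<le> 1 * (d/6)" using e0 by (intro mult_mono) auto
    then show ?thesis by (simp add: power2_eq_square)
  qed
  define Q where "Q x = d*du x^2/2 + u x^2/2 - u x^3/3 + e*u x*du x" for x
  define Qd where "Qd x = -(c-e)*du x^2 - (e*c/d)*u x*du x - (e/d)*u x^2*(1 - u x)" for x
  have dQ: "(Q has_real_derivative Qd x) (at x)" for x
  proof -
    have "(Q has_real_derivative
       d*(2*du x*((- (c * du x + u x * (1 - u x)) / d)))/2 + 2*u x*du x/2 - 3*u x^2*du x/3
         + e*(du x*du x + u x*((- (c * du x + u x * (1 - u x)) / d)))) (at x)"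
      unfolding Q_def
      by (rule derivative_eq_intros du ddu refl | simp)+ (simp add: algebra_simps power2_eq_square power3_eq_cube)
    moreover have "d*(2*du x*((- (c * du x + u x * (1 - u x)) / d)))/2 + 2*u x*du x/2 - 3*u x^2*du x/3
         + e*(du x*du x + u x*((- (c * du x + u x * (1 - u x)) / d))) = Qd x"
      unfolding Qd_def using d by (simp add: field_simps power2_eq_square power3_eq_cube)
    ultimately show ?thesis by simp
  qed
  define al where "al = min (c/(2*d)) (e/(4*d))"
  have al0: "al > 0" using c d e0 by (auto simp: al_def)
  have QdQ: "Qd x \<le> - al * Q x" if "x \<ge> s0" for x
  proof -
    have U: "\<bar>u x\<bar> \<le> 1/2" using s0 that by auto
    have i1: "Qd x \<le> -(c/2)*du x^2 - (e/(4*d))*u x^2"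
      unfolding Qd_def by (rule ineq1[OF d c e0 ec U])
    have i2: "Q x \<le> d*du x^2 + u x^2" unfolding Q_def by (rule ineq2(1)[OF d e0 e2 U])
    have a1: "al * d \<le> c/2" using d by (simp add: al_def min_def field_simps)
    have a2: "al \<le> e/(4*d)" by (simp add: al_def)
    have "- al * Q x \<ge> - al * (d*du x^2 + u x^2)" using i2 al0 by (simp add: mult_left_mono)
    moreover have "(al*d) * du x^2 \<le> (c/2) * du x^2" using a1 by (rule mult_right_mono) simp
    moreover have "al * u x^2 \<le> (e/(4*d)) * u x^2" using a2 by (rule mult_right_mono) simp
    ultimately show ?thesis using i1 by (simp add: algebra_simps)
  qed
  define G where "G x = exp(al*x) * Q x" for x
  have Gd: "(G has_real_derivative exp(al*x) * (al * Q x + Qd x)) (at x)" for x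
    unfolding G_def by (rule derivative_eq_intros dQ refl | simp)+ (simp add: algebra_simps)
  have Gle: "G x \<le> G s0" if "x \<ge> s0" for x
  proof (rule deriv_nonpos_imp_antimono[OF _ _ that, where g'="\<lambda>x. exp(al*x) * (al * Q x + Qd x)"])
    show "(G has_real_derivative exp(al*x) * (al * Q x + Qd x)) (at x)" for x by (rule Gd)
    show "exp(al*x) * (al * Q x + Qd x) \<le> 0" if "x \<in> {s0..x'}" for x x'
      using QdQ[of x] that by (intro mult_nonneg_nonpos) (auto simp: algebra_simps)
  qed
  define C where "C = 6 * G s0"
  have uC: "u x^2 \<le> C * exp(-al*x)" if "x \<ge> s0" for x
  proof -
    have U: "\<bar>u x\<bar> \<le> 1/2" using s0 that by auto
    have "u x^2/6 \<le> Q x" unfolding Q_def by (rule ineq2(2)[OF d e0 e2 U])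
    also have "Q x = G x * exp(-al*x)" by (simp add: G_def exp_minus field_simps)
    also have "\<dots> \<le> G s0 * exp(-al*x)" using Gle[OF that] by (intro mult_right_mono) auto
    finally show ?thesis by (simp add: C_def)
  qed
  have "0 \<le> C * exp(-al * s0)" using uC[of s0] zero_le_power2[of "u s0"] by linarith
  then have C0: "C \<ge> 0" by (simp add: zero_le_mult_iff)
  show ?thesis
  proof (intro exI conjI allI impI)
    show "sqrt C \<ge> 0" "al/2 > 0" using C0 al0 by auto
    fix s assume "s \<ge> s0"
    have "u s^2 \<le> (sqrt C * exp(-(al/2) * s))^2"
      using uC[OF \<open>s \<ge> s0\<close>] C0 by (simp add: power_mult_distrib exp_double[symmetric] power2_eq_square[of "exp _"] exp_add[symmetric])
    then have "\<bar>u s\<bar> \<le> \<bar>sqrt C * exp(-(al/2) * s)\<bar>" using abs_le_square_iff by blast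
    then show "\<bar>u s\<bar> \<le> sqrt C * exp(-(al/2) * s)" using C0 by simp
  qed
qed



lemma RD:
  fixes w v V :: "real \<Rightarrow> real"
  assumes dw: "\<And>x. (w has_real_derivative v x) (at x)"
    and dv: "\<And>x. (v has_real_derivative V x * w x) (at x)"
    and nz: "w x \<noteq> 0"
  shows "((\<lambda>s. v s / w s) has_real_derivative V x - (v x / w x)^2) (at x)"
proof -
  have "((\<lambda>s. v s / w s) has_real_derivative (V x * w x * w x - v x * v x) / (w x * w x)) (at x)"
    by (rule DERIV_divide[OF dv dw nz])
  moreover have "(V x * w x * w x - v x * v x) / (w x * w x) = V x - (v x / w x)^2"
    using nz by (simp add: field_simps power2_eq_square)
  ultimately show ?thesis by simp
qed

lemma inv_up:
  fixes w v V :: "real \<Rightarrow> real"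
  assumes dw: "\<And>x. (w has_real_derivative v x) (at x)"
    and dv: "\<And>x. (v has_real_derivative V x * w x) (at x)"
    and zy: "z \<le> y" and nz: "\<And>s. s \<in> {z..y} \<Longrightarrow> w s \<noteq> 0"
    and Vb: "\<And>s. s \<in> {z..y} \<Longrightarrow> V s < b^2"
    and hy: "v y / w y > b"
  shows "v z / w z > b"
proof -
  have "(\<lambda>s. v s / w s - b) z > 0"
  proof (rule G4[OF zy])
    show "continuous_on {z..y} (\<lambda>s. v s / w s - b)"
      by (intro continuous_at_imp_continuous_on ballI continuous_intros DERIV_continuous[OF RD[OF dw dv]])
         (use nz in auto)
    show "\<exists>d<0. ((\<lambda>s. v s / w s - b) has_real_derivative d) (at t)"
      if "t \<in> {z..y}" "v t / w t - b = 0" for t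
    proof (intro exI conjI)
      show "((\<lambda>s. v s / w s - b) has_real_derivative (V t - (v t / w t)^2) - 0) (at t)"
        by (intro DERIV_diff RD[OF dw dv] nz that DERIV_const)
      show "V t - (v t / w t)^2 - 0 < 0" using that Vb[OF that(1)] by auto
    qed
  qed (use hy in auto)
  then show ?thesis by simp
qed

lemma inv_down:
  fixes w v V :: "real \<Rightarrow> real"
  assumes dw: "\<And>x. (w has_real_derivative v x) (at x)"
    and dv: "\<And>x. (v has_real_derivative V x * w x) (at x)"
    and zy: "z \<le> y" and nz: "\<And>s. s \<in> {z..y} \<Longrightarrow> w s \<noteq> 0"
    and Vb: "\<And>s. s \<in> {z..y} \<Longrightarrow> V s > b^2"
    and hy: "v y / w y < b"
  shows "v z / w z < b"
proof -
  have "(\<lambda>s. b - v s / w s) z > 0"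
  proof (rule G4[OF zy])
    show "continuous_on {z..y} (\<lambda>s. b - v s / w s)"
      by (intro continuous_at_imp_continuous_on ballI continuous_intros DERIV_continuous[OF RD[OF dw dv]])
         (use nz in auto)
    show "\<exists>d<0. ((\<lambda>s. b - v s / w s) has_real_derivative d) (at t)"
      if "t \<in> {z..y}" "b - v t / w t = 0" for t
    proof (intro exI conjI)
      show "((\<lambda>s. b - v s / w s) has_real_derivative 0 - (V t - (v t / w t)^2)) (at t)"
        by (intro DERIV_diff RD[OF dw dv] nz that DERIV_const)
      have "v t / w t = b" using that by auto
      then show "0 - (V t - (v t / w t)^2) < 0" using Vb[OF that(1)] by auto
    qed
  qed (use hy in auto)
  then show ?thesis by simp
qed

lemma EX:
  fixes V :: "real \<Rightarrow> real" and r :: real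
  assumes Vc: "continuous_on UNIV V" and r0: "r > 0" and Vlim: "(V \<longlongrightarrow> r^2) at_bot"
  shows "\<exists>w v. (\<forall>x. (w has_real_derivative v x) (at x)) \<and> (\<forall>x. (v has_real_derivative V x * w x) (at x))
     \<and> (\<forall>x. w x \<noteq> 0 \<or> v x \<noteq> 0) \<and> (\<forall>\<^sub>F x in at_bot. w x \<noteq> 0) \<and> ((\<lambda>x. v x / w x) \<longlongrightarrow> r) at_bot"
proof -
  define e where "e = r/2"
  have e0: "e > 0" "e < r" using r0 by (auto simp: e_def)
  have "r^2/2 > 0" using r0 by simp
  then have "\<forall>\<^sub>F x in at_bot. dist (V x) (r^2) < r^2/2" using Vlim tendsto_iff by blast
  then obtain z0 where z0: "\<And>z. z \<le> z0 \<Longrightarrow> \<bar>V z - r^2\<bar> < r^2/2"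
    by (auto simp: eventually_at_bot_linorder dist_real_def)
  have Vup: "V z < (r+e)^2" and Vdn: "V z > (r-e)^2" if "z \<le> z0" for z
  proof -
    have h: "V z < r^2 + r^2/2" "V z > r^2 - r^2/2" using z0[OF that] abs_less_iff[of "V z - r^2" "r^2/2"] by linarith+
    have "(r+e)^2 = r^2 + r^2 + r^2/4" "(r-e)^2 = r^2/4" by (simp_all add: e_def power2_eq_square field_simps)
    moreover have "r^2 > 0" using r0 by simp
    ultimately show "V z < (r+e)^2" "V z > (r-e)^2" using h by linarith+
  qed
  obtain w1 v1 where s1: "w1 z0 = 1" "v1 z0 = 0" "\<And>x. (w1 has_real_derivative v1 x) (at x)"
      "\<And>x. (v1 has_real_derivative V x * w1 x) (at x)"
    using ode_exists[OF Vc, of z0 1 0] by blast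
  obtain w2 v2 where s2: "w2 z0 = 0" "v2 z0 = 1" "\<And>x. (w2 has_real_derivative v2 x) (at x)"
      "\<And>x. (v2 has_real_derivative V x * w2 x) (at x)"
    using ode_exists[OF Vc, of z0 0 1] by blast
  define W where "W th x = w1 x + th * w2 x" for th x
  define Vv where "Vv th x = v1 x + th * v2 x" for th x
  define eta where "eta th x = Vv th x / W th x" for th x
  have dW: "(W th has_real_derivative Vv th x) (at x)" for th x
    unfolding W_def Vv_def by (auto intro!: derivative_eq_intros s1 s2)
  have dVv: "(Vv th has_real_derivative V x * W th x) (at x)" for th x
    unfolding W_def Vv_def by (rule derivative_eq_intros s1 s2 refl | simp)+ (simp add: algebra_simps)
  have Wr: "w1 x * v2 x - v1 x * w2 x = 1" for x
  proof -
    have "((\<lambda>x. w1 x * v2 x - v1 x * w2 x) has_real_derivative 0) (at x)" for x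
      by (rule derivative_eq_intros s1 s2 refl | simp)+
    then have "w1 x * v2 x - v1 x * w2 x = w1 z0 * v2 z0 - v1 z0 * w2 z0"
      by (intro DERIV_isconst_all[of "\<lambda>x. w1 x * v2 x - v1 x * w2 x"]) auto
    then show ?thesis using s1 s2 by simp
  qed
  have nonvan: "W th x \<noteq> 0 \<or> Vv th x \<noteq> 0" for th x
  proof -
    have "W th x * v2 x - Vv th x * w2 x = 1" using Wr[of x] unfolding W_def Vv_def by (simp add: algebra_simps)
    then show ?thesis by auto
  qed
  have Wz0: "W th z0 = 1" "Vv th z0 = th" "eta th z0 = th" for th using s1 s2 by (auto simp: W_def Vv_def eta_def)
  have contW: "isCont (W th) x" for th x using dW by (rule DERIV_isCont)
  have contV: "isCont (Vv th) x" for th x using dVv by (rule DERIV_isCont)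
  define T where "T = {th. \<exists>z\<le>z0. (\<forall>s\<in>{z..z0}. W th s \<noteq> 0) \<and> eta th z > r + e}"
  define B where "B = {th. \<exists>z\<le>z0. (\<forall>s\<in>{z..z0}. W th s \<noteq> 0) \<and> eta th z < r - e}"
  have OP: "\<exists>d>0. \<forall>th'. \<bar>th' - th\<bar> < d \<longrightarrow> (\<forall>s\<in>{z..z0}. W th' s \<noteq> 0) \<and> \<bar>eta th' z - eta th z\<bar> < \<epsilon>"
    if zz: "z \<le> z0" and nz: "\<forall>s\<in>{z..z0}. W th s \<noteq> 0" and ep: "\<epsilon> > 0" for th z \<epsilon>
  proof -
    have cW: "continuous_on {z..z0} (\<lambda>s. \<bar>W th s\<bar>)" "continuous_on {z..z0} (\<lambda>s. \<bar>w2 s\<bar>)"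
      using contW DERIV_isCont[OF s2(3)] by (auto intro!: continuous_at_imp_continuous_on continuous_intros)
    obtain sm where sm: "sm \<in> {z..z0}" "\<And>s. s \<in> {z..z0} \<Longrightarrow> \<bar>W th sm\<bar> \<le> \<bar>W th s\<bar>"
      using continuous_attains_inf[OF compact_Icc _ cW(1)] zz by auto
    obtain sM where sM: "sM \<in> {z..z0}" "\<And>s. s \<in> {z..z0} \<Longrightarrow> \<bar>w2 s\<bar> \<le> \<bar>w2 sM\<bar>"
      using continuous_attains_sup[OF compact_Icc _ cW(2)] zz by auto
    define m where "m = \<bar>W th sm\<bar>"
    define M2 where "M2 = \<bar>w2 sM\<bar>"
    have m0: "m > 0" using nz sm by (auto simp: m_def)
    have M20: "M2 \<ge> 0" by (simp add: M2_def)
    define f where "f th' = (v1 z + th' * v2 z) / (w1 z + th' * w2 z)" for th'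
    have fe: "f th' = eta th' z" for th' by (simp add: f_def eta_def W_def Vv_def)
    have "W th z \<noteq> 0" using nz zz by auto
    then have "isCont f th" unfolding f_def W_def by (intro continuous_intros) auto
    then obtain d2 where d2: "d2 > 0" "\<And>th'. \<bar>th' - th\<bar> < d2 \<Longrightarrow> \<bar>f th' - f th\<bar> < \<epsilon>"
      using ep unfolding isCont_def LIM_eq by (metis diff_self abs_zero real_norm_def)
    define d where "d = min d2 (m / (M2 + 1))"
    have d0: "d > 0" using d2 m0 M20 by (auto simp: d_def)
    show ?thesis
    proof (intro exI conjI allI impI ballI)
      show "d > 0" by (rule d0)
      fix th' assume th': "\<bar>th' - th\<bar> < d"
      show "\<bar>eta th' z - eta th z\<bar> < \<epsilon>" using d2(2)[of th'] th' by (auto simp: d_def fe)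
      fix s assume s: "s \<in> {z..z0}"
      have "\<bar>th' - th\<bar> * \<bar>w2 s\<bar> \<le> \<bar>th' - th\<bar> * M2" using sM(2)[OF s] by (auto simp: M2_def intro: mult_left_mono)
      also have "\<dots> \<le> \<bar>th' - th\<bar> * (M2 + 1)" by (intro mult_left_mono) auto
      also have "\<dots> < (m / (M2 + 1)) * (M2 + 1)" using th' M20 by (intro mult_strict_right_mono) (auto simp: d_def)
      also have "\<dots> = m" using M20 by simp
      finally have "\<bar>th' - th\<bar> * \<bar>w2 s\<bar> < m" .
      moreover have "m \<le> \<bar>W th s\<bar>" using sm(2)[OF s] by (simp add: m_def)
      moreover have "W th' s = W th s + (th' - th) * w2 s" by (simp add: W_def algebra_simps)
      ultimately show "W th' s \<noteq> 0"
        by (metis abs_minus_cancel abs_mult add_eq_0_iff2 linorder_not_less)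
    qed
  qed
  have Topen: "\<exists>d>0. \<forall>th'. \<bar>th' - th\<bar> < d \<longrightarrow> th' \<in> T" if thT: "th \<in> T" for th
  proof -
    obtain z where z: "z \<le> z0" "\<forall>s\<in>{z..z0}. W th s \<noteq> 0" "eta th z > r + e" using thT by (auto simp: T_def)
    obtain d where d: "d > 0" "\<And>th'. \<bar>th' - th\<bar> < d \<Longrightarrow> (\<forall>s\<in>{z..z0}. W th' s \<noteq> 0) \<and> \<bar>eta th' z - eta th z\<bar> < eta th z - (r + e)"
      using OP[OF z(1,2), of "eta th z - (r + e)"] z(3) by auto
    show ?thesis
    proof (intro exI[of _ d] conjI allI impI)
      fix th' assume "\<bar>th' - th\<bar> < d"
      from d(2)[OF this] show "th' \<in> T" unfolding T_def using z(1) by (auto simp: abs_less_iff)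
    qed (rule d(1))
  qed
  have Bopen: "\<exists>d>0. \<forall>th'. \<bar>th' - th\<bar> < d \<longrightarrow> th' \<in> B" if thB: "th \<in> B" for th
  proof -
    obtain z where z: "z \<le> z0" "\<forall>s\<in>{z..z0}. W th s \<noteq> 0" "eta th z < r - e" using thB by (auto simp: B_def)
    obtain d where d: "d > 0" "\<And>th'. \<bar>th' - th\<bar> < d \<Longrightarrow> (\<forall>s\<in>{z..z0}. W th' s \<noteq> 0) \<and> \<bar>eta th' z - eta th z\<bar> < (r - e) - eta th z"
      using OP[OF z(1,2), of "(r - e) - eta th z"] z(3) by auto
    show ?thesis
    proof (intro exI[of _ d] conjI allI impI)
      fix th' assume "\<bar>th' - th\<bar> < d"
      from d(2)[OF this] show "th' \<in> B" unfolding B_def using z(1) by (auto simp: abs_less_iff)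
    qed (rule d(1))
  qed
  have deta: "(eta th has_real_derivative V x - (eta th x)^2) (at x)" if "W th x \<noteq> 0" for th x
    unfolding eta_def by (rule RD[OF dW dVv that])
  have nz0: "\<exists>d>0. \<forall>s. \<bar>s - z0\<bar> < d \<longrightarrow> W th s \<noteq> 0" for th
  proof -
    have "\<forall>\<^sub>F s in at z0. W th s \<noteq> 0"
      using tendsto_imp_eventually_ne[OF contW[unfolded isCont_def, of th z0], of 0] Wz0 by auto
    then obtain d where "d > 0" "\<And>s. s \<noteq> z0 \<Longrightarrow> dist s z0 < d \<Longrightarrow> W th s \<noteq> 0"
      by (auto simp: eventually_at)
    then show ?thesis using Wz0 by (metis dist_real_def zero_neq_one)
  qed
  have TB: "r + e \<in> T"
  proof -
    have "V z0 - (eta (r+e) z0)^2 < 0" using Vup[of z0] Wz0 by simp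
    from DERIV_neg_dec_left[OF deta this] Wz0
    obtain d where d: "d > 0" "\<And>h. h > 0 \<Longrightarrow> h < d \<Longrightarrow> eta (r+e) z0 < eta (r+e) (z0 - h)" by auto
    obtain d' where d': "d' > 0" "\<And>s. \<bar>s - z0\<bar> < d' \<Longrightarrow> W (r+e) s \<noteq> 0" using nz0 by blast
    define h where "h = min d d' / 2"
    have h: "h > 0" "h < d" "h < d'" using d d' by (auto simp: h_def)
    show ?thesis unfolding T_def
    proof (intro CollectI exI conjI ballI)
      show "z0 - h \<le> z0" using h by simp
      show "W (r + e) s \<noteq> 0" if "s \<in> {z0 - h..z0}" for s using that h d' by auto
      show "eta (r + e) (z0 - h) > r + e" using d(2)[OF h(1,2)] Wz0 by simp
    qed
  qed
  have BB: "r - e \<in> B"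
  proof -
    have "V z0 - (eta (r-e) z0)^2 > 0" using Vdn[of z0] Wz0 by simp
    from DERIV_pos_inc_left[OF deta this] Wz0
    obtain d where d: "d > 0" "\<And>h. h > 0 \<Longrightarrow> h < d \<Longrightarrow> eta (r-e) (z0 - h) < eta (r-e) z0" by auto
    obtain d' where d': "d' > 0" "\<And>s. \<bar>s - z0\<bar> < d' \<Longrightarrow> W (r-e) s \<noteq> 0" using nz0 by blast
    define h where "h = min d d' / 2"
    have h: "h > 0" "h < d" "h < d'" using d d' by (auto simp: h_def)
    show ?thesis unfolding B_def
    proof (intro CollectI exI conjI ballI)
      show "z0 - h \<le> z0" using h by simp
      show "W (r - e) s \<noteq> 0" if "s \<in> {z0 - h..z0}" for s using that h d' by auto
      show "eta (r - e) (z0 - h) < r - e" using d(2)[OF h(1,2)] Wz0 by simp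
    qed
  qed
  have up: "eta th z > r + e" if "z \<le> y" "y \<le> z0" "\<forall>s\<in>{z..y}. W th s \<noteq> 0" "eta th y > r + e" for th z y
    using inv_up[OF dW dVv that(1), of th "r+e"] that Vup unfolding eta_def by auto
  have dn: "eta th z < r - e" if "z \<le> y" "y \<le> z0" "\<forall>s\<in>{z..y}. W th s \<noteq> 0" "eta th y < r - e" for th z y
    using inv_down[OF dW dVv that(1), of th "r-e"] that Vdn unfolding eta_def by auto
  have disj: "th \<notin> T \<inter> B" for th
  proof
    assume "th \<in> T \<inter> B"
    then obtain z1 z2 where 1: "z1 \<le> z0" "\<forall>s\<in>{z1..z0}. W th s \<noteq> 0" "eta th z1 > r + e"
      and 2: "z2 \<le> z0" "\<forall>s\<in>{z2..z0}. W th s \<noteq> 0" "eta th z2 < r - e" by (auto simp: T_def B_def)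
    show False
    proof (cases "z1 \<le> z2")
      case True
      then have "eta th z1 < r - e" using dn[of z1 z2 th] 1 2 by auto
      then show False using 1 e0 by auto
    next
      case False
      then have "eta th z2 > r + e" using up[of z2 z1 th] 1 2 by auto
      then show False using 2 e0 by auto
    qed
  qed
  define Bs where "Bs = {th \<in> {r-e..r+e}. th \<in> B}"
  define ts where "ts = Sup Bs"
  have "r - e \<in> Bs" using BB e0 by (auto simp: Bs_def)
  then have Bs_ne: "Bs \<noteq> {}" by auto
  have Bs_bdd: "bdd_above Bs" by (auto simp: Bs_def bdd_above_def)
  have ts_range: "r - e \<le> ts" "ts \<le> r + e"
    using cSup_upper[OF _ Bs_bdd, of "r-e"] BB e0 cSup_least[OF Bs_ne, of "r+e"]
    by (auto simp: ts_def Bs_def)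
  have tsB: "ts \<notin> B"
  proof
    assume "ts \<in> B"
    then obtain d where d: "d > 0" "\<And>th'. \<bar>th' - ts\<bar> < d \<Longrightarrow> th' \<in> B" using Bopen by blast
    have "ts \<noteq> r + e" using disj TB \<open>ts \<in> B\<close> by auto
    then have lt: "ts < r + e" using ts_range by auto
    define th' where "th' = min (ts + d/2) (r + e)"
    have "th' \<in> Bs" using d lt ts_range by (auto simp: Bs_def th'_def intro!: d(2))
    then have "th' \<le> ts" unfolding ts_def by (rule cSup_upper[OF _ Bs_bdd])
    then show False using d lt by (auto simp: th'_def)
  qed
  have tsT: "ts \<notin> T"
  proof
    assume "ts \<in> T"
    then obtain d where d: "d > 0" "\<And>th'. \<bar>th' - ts\<bar> < d \<Longrightarrow> th' \<in> T" using Topen by blast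
    have "ts - d < Sup Bs" using d by (simp add: ts_def)
    then obtain th' where th': "th' \<in> Bs" "ts - d < th'" using less_cSup_iff[OF Bs_ne Bs_bdd] by auto
    have "th' \<le> ts" unfolding ts_def by (rule cSup_upper[OF th'(1) Bs_bdd])
    then have "th' \<in> T" using th' by (intro d(2)) auto
    then show False using disj th' by (auto simp: Bs_def)
  qed
  define w where "w = W ts"
  define v where "v = Vv ts"
  have band: "W ts z \<noteq> 0 \<and> r - e \<le> eta ts z \<and> eta ts z \<le> r + e" if zz: "z \<le> z0" for z
  proof (rule ccontr)
    assume neg: "\<not> ?thesis"
    show False
    proof (cases "\<exists>s\<in>{z..z0}. W ts s = 0")
      case True
      define Z where "Z = {s \<in> {z..z0}. W ts s = 0}"
      have Zne: "Z \<noteq> {}" using True by (auto simp: Z_def)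
      have Zbdd: "bdd_above Z" by (auto simp: Z_def bdd_above_def)
      have Zcl: "closed Z"
      proof -
        have "continuous_on {z..z0} (W ts)" using contW by (auto intro: continuous_at_imp_continuous_on)
        then show ?thesis unfolding Z_def by (rule continuous_closed_preimage_constant) auto
      qed
      define t where "t = Sup Z"
      have tZ: "t \<in> Z" unfolding t_def using closed_contains_Sup[OF Zne Zbdd Zcl] .
      have tup: "s \<le> t" if "s \<in> Z" for s using cSup_upper[OF that Zbdd] by (simp add: t_def)
      have t1: "z \<le> t" "t \<le> z0" "W ts t = 0" using tZ by (auto simp: Z_def)
      have tz0: "t < z0" using t1 Wz0 by (metis order.not_eq_order_implies_strict zero_neq_one)
      have nzr: "W ts s \<noteq> 0" if "t < s" "s \<le> z0" for s using tup[of s] that t1 by (force simp: Z_def)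
      have vt: "Vv ts t \<noteq> 0" using nonvan t1 by auto
      define q where "q = \<bar>Vv ts t\<bar>"
      have q0: "q > 0" using vt by (simp add: q_def)
      have "\<forall>\<^sub>F s in at t. \<bar>W ts s\<bar> < q / (2*(r+e))"
      proof -
        have "((\<lambda>s. \<bar>W ts s\<bar>) \<longlongrightarrow> \<bar>W ts t\<bar>) (at t)" using contW[where th=ts and x=t] unfolding isCont_def by (intro tendsto_rabs)
        then show ?thesis using t1 q0 r0 e0 by (intro order_tendstoD(2)) (auto simp: add_pos_pos)
      qed
      moreover have "\<forall>\<^sub>F s in at t. \<bar>Vv ts s\<bar> > q / 2"
      proof -
        have "((\<lambda>s. \<bar>Vv ts s\<bar>) \<longlongrightarrow> \<bar>Vv ts t\<bar>) (at t)" using contV[where th=ts and x=t] unfolding isCont_def by (intro tendsto_rabs)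
        then show ?thesis using q0 by (intro order_tendstoD(1)) (auto simp: q_def)
      qed
      ultimately have a: "\<forall>\<^sub>F s in at_right t. \<bar>W ts s\<bar> < q / (2*(r+e))" "\<forall>\<^sub>F s in at_right t. \<bar>Vv ts s\<bar> > q / 2"
        using filter_leD[OF at_le[of "{t<..}" UNIV t]] by auto
      have "\<forall>\<^sub>F s in at_right t. s \<le> z0" using tz0 unfolding eventually_at_right_field
        by (intro exI[of _ z0]) auto
      then have "\<forall>\<^sub>F s in at_right t. \<bar>W ts s\<bar> < q / (2*(r+e)) \<and> \<bar>Vv ts s\<bar> > q / 2 \<and> s \<le> z0"
        using a by (auto intro: eventually_conj)
      moreover have "\<forall>\<^sub>F s in at_right t. t < s" by (rule eventually_at_right_less)
      ultimately obtain s where s: "\<bar>W ts s\<bar> < q / (2*(r+e))" "\<bar>Vv ts s\<bar> > q / 2" "s \<le> z0" "t < s"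
        using eventually_happens[OF eventually_conj] trivial_limit_at_right_real by blast
      have Wsn: "W ts s \<noteq> 0" using nzr s by auto
      have "\<bar>eta ts s\<bar> > r + e"
      proof -
        have rp: "r + e > 0" using r0 e0 by auto
        have "(r + e) * \<bar>W ts s\<bar> < (r+e) * (q / (2*(r+e)))" using s(1) rp by (intro mult_strict_left_mono) auto
        also have "\<dots> = q/2" using rp by (simp add: field_simps)
        also have "\<dots> < \<bar>Vv ts s\<bar>" by (rule s(2))
        finally show ?thesis using Wsn by (simp add: eta_def abs_divide pos_less_divide_eq)
      qed
      moreover have nzs: "\<forall>x\<in>{s..z0}. W ts x \<noteq> 0" using nzr s by auto
      ultimately have "ts \<in> T \<or> ts \<in> B" unfolding T_def B_def using s(3) e0 r0
        by (auto simp: abs_less_iff not_less intro!: exI[of _ s]) 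
      then show False using tsT tsB by auto
    next
      case False
      then have nzs: "\<forall>x\<in>{z..z0}. W ts x \<noteq> 0" by auto
      then have "eta ts z > r + e \<or> eta ts z < r - e" using neg zz by auto
      then have "ts \<in> T \<or> ts \<in> B" unfolding T_def B_def using nzs zz by auto
      then show False using tsT tsB by auto
    qed
  qed
  have conv: "\<forall>\<^sub>F x in at_bot. \<bar>eta ts x - r\<bar> < \<epsilon>" if ep: "\<epsilon> > 0" for \<epsilon>
  proof -
    define e' where "e' = min (\<epsilon>/2) e"
    have e': "e' > 0" "e' \<le> e" "e' < \<epsilon>" using ep e0 by (auto simp: e'_def)
    have re: "r * e' > 0" using r0 e' by auto
    have "\<forall>\<^sub>F x in at_bot. dist (V x) (r^2) < r * e'" using Vlim re tendsto_iff by blast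
    from eventually_conj[OF this eventually_le_at_bot[of z0]]
    obtain z'' where z'': "\<And>x. x \<le> z'' \<Longrightarrow> dist (V x) (r^2) < r * e' \<and> x \<le> z0"
      by (auto simp: eventually_at_bot_linorder)
    define z' where "z' = z''"
    have z': "\<And>x. x \<le> z' \<Longrightarrow> \<bar>V x - r^2\<bar> < r * e'" "z' \<le> z0"
      using z'' by (auto simp: z'_def dist_real_def)
    have nzb: "\<forall>s\<in>{a..b}. W ts s \<noteq> 0" if "b \<le> z0" for a b using band that by auto
    have key: "\<bar>eta ts y - r\<bar> \<le> e'" if y: "y \<le> z'" for y
    proof (rule ccontr)
      assume "\<not> \<bar>eta ts y - r\<bar> \<le> e'"
      then consider "eta ts y > r + e'" | "eta ts y < r - e'" by linarith
      then show False
      proof cases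
        case 1
        have Vu: "V x < (r + e')^2" if "x \<le> y" for x
        proof -
          have "V x < r^2 + r*e'" using z'(1)[of x] that y by (auto simp: abs_less_iff)
          also have "\<dots> \<le> (r + e')^2" using re e' by (simp add: power2_eq_square algebra_simps)
          finally show ?thesis .
        qed
        have inv: "eta ts s > r + e'" if "s \<le> y" for s
          using inv_up[OF dW dVv that, of ts "r + e'"] nzb[of y s] y z'(2) Vu 1 unfolding eta_def by auto
        define s where "s = y - 2*e/(r*e')"
        have sy: "s \<le> y" using re e0 by (auto simp: s_def)
        have "(\<lambda>x. - eta ts x - r*e'*x) s \<le> (\<lambda>x. - eta ts x - r*e'*x) y"
        proof (rule deriv_nonneg_imp_mono[OF _ _ sy])
          fix x assume x: "x \<in> {s..y}"
          have Wx: "W ts x \<noteq> 0" using band[of x] x y z'(2) by auto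
          show "((\<lambda>x. - eta ts x - r*e'*x) has_real_derivative - (V x - (eta ts x)^2) - r*e') (at x)"
            by (rule derivative_eq_intros deta[OF Wx] refl | simp)+
          have "eta ts x > r + e'" using inv x by auto
          then have a1: "(r + e')^2 < (eta ts x)^2" using r0 e' by (intro power_strict_mono) auto
          have a2: "V x < r^2 + r*e'" using z'(1)[of x] x y by (auto simp: abs_less_iff)
          have a3: "(r + e')^2 = r^2 + 2*(r*e') + e'^2" by (simp add: power2_eq_square algebra_simps)
          show "0 \<le> - (V x - (eta ts x)^2) - r*e'" using a1 a2 a3 zero_le_power2[of e'] by linarith
        qed
        then have "eta ts s \<ge> eta ts y + r*e'*(y - s)" by (simp add: algebra_simps)
        moreover have "r*e'*(y - s) = 2*e" using r0 e' by (simp add: s_def field_simps)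
        ultimately have "eta ts s > r + e" using 1 e' by linarith
        then show False using band[of s] sy y z'(2) by auto
      next
        case 2
        have Vd: "V x > (r - e')^2" if "x \<le> y" for x
        proof -
          have "(r - e')^2 \<le> r^2 - r*e'" using re e' e0 by (simp add: power2_eq_square algebra_simps e_def)
          also have "\<dots> < V x" using z'(1)[of x] that y by (auto simp: abs_less_iff)
          finally show ?thesis .
        qed
        have inv: "eta ts s < r - e'" if "s \<le> y" for s
          using inv_down[OF dW dVv that, of ts "r - e'"] nzb[of y s] y z'(2) Vd 2 unfolding eta_def by auto
        define s where "s = y - 4*e/(r*e')"
        have sy: "s \<le> y" using re e0 by (auto simp: s_def)
        have "(\<lambda>x. eta ts x - (r*e'/2)*x) s \<le> (\<lambda>x. eta ts x - (r*e'/2)*x) y"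
        proof (rule deriv_nonneg_imp_mono[OF _ _ sy])
          fix x assume x: "x \<in> {s..y}"
          have bx: "W ts x \<noteq> 0" "r - e \<le> eta ts x" using band[of x] x y z'(2) by auto
          show "((\<lambda>x. eta ts x - (r*e'/2)*x) has_real_derivative (V x - (eta ts x)^2) - r*e'/2) (at x)"
            by (rule derivative_eq_intros deta[OF bx(1)] refl | simp)+
          have "eta ts x < r - e'" using inv x by auto
          moreover have "eta ts x > 0" using bx e0 by (simp add: e_def)
          ultimately have b1: "(eta ts x)^2 < (r - e')^2" by (intro power_strict_mono) auto
          have b2: "V x > r^2 - r*e'" using z'(1)[of x] x y by (auto simp: abs_less_iff)
          have b3: "r*e'/2 \<le> r*e' - e'^2"
          proof -
            have "e' \<le> r/2" using e' by (simp add: e_def)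
            then have "e' * e' \<le> (r/2) * e'" using e' by (intro mult_right_mono) auto
            then show ?thesis by (simp add: power2_eq_square algebra_simps)
          qed
          have b4: "(r - e')^2 = r^2 - 2*(r*e') + e'^2" by (simp add: power2_eq_square algebra_simps)
          show "0 \<le> (V x - (eta ts x)^2) - r*e'/2" using b1 b2 b3 b4 by linarith
        qed
        then have "eta ts s \<le> eta ts y - (r*e'/2)*(y - s)" by (simp add: algebra_simps diff_divide_distrib)
        moreover have "(r*e'/2)*(y - s) = 2*e" using r0 e' by (simp add: s_def field_simps)
        ultimately have "eta ts s < r - e" using 2 e' by linarith
        then show False using band[of s] sy y z'(2) by auto
      qed
    qed
    have "\<forall>x\<le>z'. \<bar>eta ts x - r\<bar> < \<epsilon>"
    proof (intro allI impI)
      fix x assume "x \<le> z'"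
      from key[OF this] e'(3) show "\<bar>eta ts x - r\<bar> < \<epsilon>" by linarith
    qed
    then show ?thesis unfolding eventually_at_bot_linorder by blast
  qed
  have L: "((\<lambda>x. Vv ts x / W ts x) \<longlongrightarrow> r) at_bot"
    unfolding tendsto_iff dist_real_def using conv by (simp add: eta_def)
  have E: "\<forall>\<^sub>F x in at_bot. W ts x \<noteq> 0" unfolding eventually_at_bot_linorder
    using band by blast
  show ?thesis
    by (rule exI[of _ "W ts"], rule exI[of _ "Vv ts"]) (use dW dVv nonvan L E in blast)
qed



lemma reduce:
  fixes P Qf V :: "real \<Rightarrow> real" and k :: real
  assumes dP: "\<And>x. (P has_real_derivative Qf x) (at x)"
    and dQ: "\<And>x. (Qf has_real_derivative (-(k^2) + V x) * P x - 2*k*Qf x) (at x)"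
  shows "((\<lambda>z. exp(k*z) * P z) has_real_derivative exp(k*x) * (k * P x + Qf x)) (at x)"
    and "((\<lambda>z. exp(k*z) * (k * P z + Qf z)) has_real_derivative V x * (exp(k*x) * P x)) (at x)"
proof -
  show "((\<lambda>z. exp(k*z) * P z) has_real_derivative exp(k*x) * (k * P x + Qf x)) (at x)"
    by (rule derivative_eq_intros dP refl | simp)+ (simp add: algebra_simps)
  show "((\<lambda>z. exp(k*z) * (k * P z + Qf z)) has_real_derivative V x * (exp(k*x) * P x)) (at x)"
    by (rule derivative_eq_intros dP dQ refl | simp)+ (simp add: algebra_simps power2_eq_square)
qed

lemma Re_deriv:
  assumes "(p has_vector_derivative q) (at x)"
  shows "((\<lambda>z. Re (p z)) has_real_derivative Re q) (at x)"
    and "((\<lambda>z. Im (p z)) has_real_derivative Im q) (at x)"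
  using bounded_linear.has_vector_derivative[OF bounded_linear_Re assms]
    bounded_linear.has_vector_derivative[OF bounded_linear_Im assms]
  by (auto simp: has_real_derivative_iff_has_vector_derivative)

lemma TOP:
  fixes u :: "real \<Rightarrow> real" and d c lamt k K gm s0 :: real and p q :: "real \<Rightarrow> complex"
  assumes d: "d > 0" and kdef: "k = c/(2*d)" and ldef: "lamt = 1 - c^2/(4*d)"
    and ric: "riccati_solution d c u (complex_of_real lamt) p q"
    and K: "K \<ge> 0" and gm: "gm > 0" and Vb: "\<And>s. s \<ge> s0 \<Longrightarrow> \<bar>2 * u s / d\<bar> \<le> K * exp(-gm * s)"
  shows "proj_tendsto p q (complex_of_real (-k)) at_top"
proof -
  define V where "V z = 2 * u z / d" for z
  have dp: "\<And>z. (p has_vector_derivative q z) (at z)"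
    and dq: "\<And>z. (q has_vector_derivative ((complex_of_real lamt - 1 + 2 * u z) / d * p z - c / d * q z)) (at z)"
    and nv: "\<And>z. p z \<noteq> 0 \<or> q z \<noteq> 0"
    using ric unfolding riccati_solution_def by auto
  have coef: "(complex_of_real lamt - 1 + 2 * complex_of_real (u z)) / complex_of_real d = complex_of_real (-(k^2) + V z)"
    "complex_of_real c / complex_of_real d = complex_of_real (2*k)" for z
    using d by (simp_all add: kdef ldef V_def field_simps power2_eq_square)
  have dq': "(q has_vector_derivative (complex_of_real (-(k^2) + V z) * p z - complex_of_real (2*k) * q z)) (at z)" for z
    using dq[of z] coef(1)[of z] coef(2) by simp
  have dRe: "((\<lambda>z. Re (p z)) has_real_derivative Re (q x)) (at x)"
    "((\<lambda>z. Re (q z)) has_real_derivative (-(k^2) + V x) * Re (p x) - 2*k * Re (q x)) (at x)"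
    "((\<lambda>z. Im (p z)) has_real_derivative Im (q x)) (at x)"
    "((\<lambda>z. Im (q z)) has_real_derivative (-(k^2) + V x) * Im (p x) - 2*k * Im (q x)) (at x)" for x
    using Re_deriv[OF dp] Re_deriv[OF dq'] by simp_all
  define wR where "wR z = exp(k*z) * Re (p z)" for z
  define wR1 where "wR1 z = exp(k*z) * (k * Re (p z) + Re (q z))" for z
  define wI where "wI z = exp(k*z) * Im (p z)" for z
  define wI1 where "wI1 z = exp(k*z) * (k * Im (p z) + Im (q z))" for z
  have dR: "(wR has_real_derivative wR1 x) (at x)" "(wR1 has_real_derivative V x * wR x) (at x)" for x
    unfolding wR_def wR1_def using reduce[OF dRe(1) dRe(2)] by auto
  have dI: "(wI has_real_derivative wI1 x) (at x)" "(wI1 has_real_derivative V x * wI x) (at x)" for x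
    unfolding wI_def wI1_def using reduce[OF dRe(3) dRe(4)] by auto
  have Vb': "\<And>s. s \<ge> s0 \<Longrightarrow> \<bar>V s\<bar> \<le> K * exp(-gm * s)" using Vb by (simp add: V_def)
  obtain AR BR where R: "(wR1 \<longlongrightarrow> BR) at_top" "((\<lambda>z. wR z - BR*z) \<longlongrightarrow> AR) at_top"
      "AR = 0 \<and> BR = 0 \<longrightarrow> (\<forall>\<^sub>F z in at_top. wR z = 0 \<and> wR1 z = 0)"
    using PB[OF dR(1) dR(2) K gm Vb'] by blast
  obtain AI BI where I: "(wI1 \<longlongrightarrow> BI) at_top" "((\<lambda>z. wI z - BI*z) \<longlongrightarrow> AI) at_top"
      "AI = 0 \<and> BI = 0 \<longrightarrow> (\<forall>\<^sub>F z in at_top. wI z = 0 \<and> wI1 z = 0)"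
    using PB[OF dI(1) dI(2) K gm Vb'] by blast
  define W where "W z = complex_of_real (exp(k*z)) * p z" for z
  define W1 where "W1 z = complex_of_real (exp(k*z)) * (complex_of_real k * p z + q z)" for z
  have WRI: "W z = Complex (wR z) (wI z)" "W1 z = Complex (wR1 z) (wI1 z)" for z
    by (simp_all add: W_def W1_def wR_def wI_def wR1_def wI1_def complex_eq_iff)
  define Ac where "Ac = Complex AR AI"
  define Bc where "Bc = Complex BR BI"
  have LB: "(W1 \<longlongrightarrow> Bc) at_top" unfolding WRI Bc_def by (intro tendsto_Complex R(1) I(1))
  have LA: "((\<lambda>z. W z - Bc * complex_of_real z) \<longlongrightarrow> Ac) at_top"
  proof -
    have "W z - Bc * complex_of_real z = Complex (wR z - BR*z) (wI z - BI*z)" for z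
      by (simp add: WRI Bc_def complex_eq_iff)
    then show ?thesis unfolding Ac_def by (simp only:) (intro tendsto_Complex R(2) I(2))
  qed
  have pW: "p z = 0 \<longleftrightarrow> W z = 0" for z by (simp add: W_def)
  have qp: "q z / p z = W1 z / W z - complex_of_real k" if "p z \<noteq> 0" for z
    using that by (simp add: W_def W1_def field_simps)
  have main: "(\<forall>\<^sub>F z in at_top. W z \<noteq> 0) \<and> ((\<lambda>z. W1 z / W z) \<longlongrightarrow> 0) at_top"
  proof (cases "Bc = 0")
    case False
    have z0: "((\<lambda>z. 1 / complex_of_real z) \<longlongrightarrow> 0) at_top"
    proof -
      have "((\<lambda>z. complex_of_real (1 / z)) \<longlongrightarrow> complex_of_real 0) at_top"
        by (intro tendsto_of_real) real_asymp
      then show ?thesis by simp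
    qed
    have "((\<lambda>z. (W z - Bc * complex_of_real z) * (1 / complex_of_real z) + Bc) \<longlongrightarrow> Bc) at_top"
      using tendsto_add[OF tendsto_mult[OF LA z0] tendsto_const[of Bc]] by simp
    moreover have "\<forall>\<^sub>F z in at_top. (W z - Bc * complex_of_real z) * (1 / complex_of_real z) + Bc = W z / complex_of_real z"
      using eventually_gt_at_top[of 0] by eventually_elim (simp add: field_simps)
    ultimately have Wz: "((\<lambda>z. W z / complex_of_real z) \<longlongrightarrow> Bc) at_top"
      by (rule tendsto_cong[THEN iffD1, rotated])
    have ev: "\<forall>\<^sub>F z in at_top. W z / complex_of_real z \<noteq> 0" using tendsto_imp_eventually_ne[OF Wz False] .
    then have evW: "\<forall>\<^sub>F z in at_top. W z \<noteq> 0" by eventually_elim auto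
    have "((\<lambda>z. (W1 z * (1 / complex_of_real z)) / (W z / complex_of_real z)) \<longlongrightarrow> 0) at_top"
      using tendsto_divide[OF tendsto_mult[OF LB z0] Wz False] by simp
    moreover have "\<forall>\<^sub>F z in at_top. (W1 z * (1 / complex_of_real z)) / (W z / complex_of_real z) = W1 z / W z"
      using eventually_gt_at_top[of 0] by eventually_elim (simp add: field_simps)
    ultimately have "((\<lambda>z. W1 z / W z) \<longlongrightarrow> 0) at_top" by (rule tendsto_cong[THEN iffD1, rotated])
    then show ?thesis using evW by blast
  next
    case True
    then have LW: "(W \<longlongrightarrow> Ac) at_top" using LA by simp
    show ?thesis
    proof (cases "Ac = 0")
      case False
      have evW: "\<forall>\<^sub>F z in at_top. W z \<noteq> 0" using tendsto_imp_eventually_ne[OF LW False] .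
      have "((\<lambda>z. W1 z / W z) \<longlongrightarrow> Bc / Ac) at_top" by (intro tendsto_intros LB LW False)
      then show ?thesis using evW True by simp
    next
      case Ac0: True
      have "AR = 0 \<and> BR = 0" "AI = 0 \<and> BI = 0" using True Ac0 by (auto simp: Ac_def Bc_def complex_eq_iff)
      then have "\<forall>\<^sub>F z in at_top. (wR z = 0 \<and> wR1 z = 0) \<and> (wI z = 0 \<and> wI1 z = 0)"
        using eventually_conj[of "\<lambda>z. wR z = 0 \<and> wR1 z = 0" at_top "\<lambda>z. wI z = 0 \<and> wI1 z = 0"] R(3) I(3) by blast
      then obtain z where "wR z = 0" "wR1 z = 0" "wI z = 0" "wI1 z = 0"
        using eventually_happens[of _ at_top] by fastforce
      then have "W z = 0" "W1 z = 0" by (simp_all add: WRI complex_eq_iff)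
      then have "p z = 0" "q z = 0" by (auto simp: W_def W1_def)
      then show ?thesis using nv by blast
    qed
  qed
  show ?thesis unfolding proj_tendsto_def
  proof
    show ev: "\<forall>\<^sub>F z in at_top. p z \<noteq> 0" using main pW by simp
    have "((\<lambda>z. W1 z / W z - complex_of_real k) \<longlongrightarrow> complex_of_real (-k)) at_top"
      using tendsto_diff[OF conjunct2[OF main] tendsto_const[of "complex_of_real k"]] by simp
    moreover have "\<forall>\<^sub>F z in at_top. W1 z / W z - complex_of_real k = q z / p z"
      using ev by eventually_elim (simp add: qp)
    ultimately show "((\<lambda>z. q z / p z) \<longlongrightarrow> complex_of_real (-k)) at_top"
      by (rule tendsto_cong[THEN iffD1, rotated])
  qed
qed

theorem mainTheorem6:
  fixes \<delta> c :: real and u :: "real \<Rightarrow> real"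
  assumes "\<delta> > 0" and "0 < c" and "c \<le> 2 * sqrt \<delta>"
    and "travelling_wave \<delta> c u"
  defines "lamt \<equiv> 1 - c\<^sup>2 / (4 * \<delta>)"
  shows "lamt \<ge> 0
    \<and> mu_s_plus \<delta> c (complex_of_real lamt) = - c / (2 * \<delta>)
    \<and> mu_u_plus \<delta> c (complex_of_real lamt) = - c / (2 * \<delta>)
    \<and> eigenvalue_ext \<delta> c u (complex_of_real lamt)
    \<and> (\<forall>p q. riccati_solution \<delta> c u (complex_of_real lamt) p q \<and>
             proj_tendsto p q (mu_u_minus \<delta> c (complex_of_real lamt)) at_bot \<longrightarrow>
             proj_tendsto p q (mu_s_plus \<delta> c (complex_of_real lamt)) at_top)
    \<and> (c < 2 * sqrt \<delta> \<longrightarrow> lamt > 0)"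
proof -
  note d = assms(1) and c = assms(2) and c2 = assms(3)
  have ldef: "lamt = 1 - c^2/(4*\<delta>)" using assms(5) by simp
  obtain du where du: "\<And>z. (u has_real_derivative du z) (at z)"
    and ddu: "\<And>z. (du has_real_derivative (- (c * du z + u z * (1 - u z)) / \<delta>)) (at z)"
    and ubot: "(u \<longlongrightarrow> 1) at_bot" and utop: "(u \<longlongrightarrow> 0) at_top"
    using assms(4) unfolding travelling_wave_def by blast
  have cc: "c^2 \<le> 4*\<delta>"
  proof -
    have "c^2 \<le> (2 * sqrt \<delta>)^2" using c c2 by (intro power_mono) auto
    also have "\<dots> = 4*\<delta>" using d by (simp add: power_mult_distrib)
    finally show ?thesis .
  qed
  have lam0: "lamt \<ge> 0" using cc d by (simp add: ldef field_simps)
  have lampos: "c < 2 * sqrt \<delta> \<longrightarrow> lamt > 0"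
  proof
    assume "c < 2 * sqrt \<delta>"
    then have "c^2 < (2 * sqrt \<delta>)^2" using c by (intro power_strict_mono) auto
    also have "\<dots> = 4*\<delta>" using d by (simp add: power_mult_distrib)
    finally show "lamt > 0" using d by (simp add: ldef field_simps)
  qed
  define k where "k = c/(2*\<delta>)"
  have z0: "(complex_of_real c)^2 + 4 * complex_of_real \<delta> * (complex_of_real lamt - 1) = 0"
  proof -
    have "c^2 + 4*\<delta>*(lamt - 1) = 0" using d by (simp add: ldef field_simps)
    then have "complex_of_real (c^2 + 4*\<delta>*(lamt - 1)) = 0" by simp
    then show ?thesis by simp
  qed
  have mus: "mu_s_plus \<delta> c (complex_of_real lamt) = - c / (2 * \<delta>)"
    unfolding mu_s_plus_def using z0 by simp
  have muu: "mu_u_plus \<delta> c (complex_of_real lamt) = - c / (2 * \<delta>)"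
    unfolding mu_u_plus_def using z0 by simp
  have musk: "mu_s_plus \<delta> c (complex_of_real lamt) = complex_of_real (-k)"
    using mus by (simp add: k_def)
  define r where "r = sqrt (2/\<delta>)"
  have r0: "r > 0" using d by (simp add: r_def)
  have r2: "r^2 = 2/\<delta>" using d by (simp add: r_def)
  have mum: "mu_u_minus \<delta> c (complex_of_real lamt) = complex_of_real (r - k)"
  proof -
    have e1: "(complex_of_real c)^2 + 4 * complex_of_real \<delta> * (complex_of_real lamt + 1) = complex_of_real (8*\<delta>)"
    proof -
      have "c^2 + 4*\<delta>*(lamt + 1) = 8*\<delta>" using d by (simp add: ldef field_simps)
      then have "complex_of_real (c^2 + 4*\<delta>*(lamt + 1)) = complex_of_real (8*\<delta>)" by simp
      then show ?thesis by simp
    qed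
    have e2: "csqrt (complex_of_real (8*\<delta>)) = complex_of_real (sqrt (8*\<delta>))"
      using of_real_sqrt[of "8*\<delta>"] d by simp
    have e3: "sqrt (8*\<delta>) = 2*\<delta>*r"
    proof -
      have "8*\<delta> = (2*\<delta>)^2 * (2/\<delta>)" using d by (simp add: power2_eq_square field_simps)
      then have "sqrt (8*\<delta>) = sqrt ((2*\<delta>)^2 * (2/\<delta>))" by (rule arg_cong)
      also have "\<dots> = sqrt ((2*\<delta>)^2) * sqrt (2/\<delta>)" by (rule real_sqrt_mult)
      also have "\<dots> = 2*\<delta>*r" unfolding real_sqrt_abs using d by (simp add: r_def)
      finally show ?thesis .
    qed
    show ?thesis unfolding mu_u_minus_def e1 e2 e3 using d
      by (simp add: k_def field_simps)
  qed
  obtain K0 gm s0 where LYr: "K0 \<ge> 0" "gm > 0" "\<And>s. s \<ge> s0 \<Longrightarrow> \<bar>u s\<bar> \<le> K0 * exp(-gm * s)"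
    using LY[OF d c du ddu utop] by blast
  have Vb: "\<bar>2 * u s / \<delta>\<bar> \<le> (2*K0/\<delta>) * exp(-gm * s)" if "s \<ge> s0" for s
  proof -
    have "\<bar>2 * u s / \<delta>\<bar> = (2/\<delta>) * \<bar>u s\<bar>" using d by (simp add: abs_mult)
    also have "\<dots> \<le> (2/\<delta>) * (K0 * exp(-gm * s))" using LYr(3)[OF that] d by (intro mult_left_mono) auto
    finally show ?thesis by simp
  qed
  have K1: "2*K0/\<delta> \<ge> 0" using LYr d by simp
  have TOPall: "proj_tendsto p q (mu_s_plus \<delta> c (complex_of_real lamt)) at_top"
    if "riccati_solution \<delta> c u (complex_of_real lamt) p q" for p q
    unfolding musk by (rule TOP[OF d k_def ldef that K1 LYr(2) Vb])
  define V where "V z = 2 * u z / \<delta>" for z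
  have cu: "continuous_on UNIV u" using du by (meson DERIV_isCont continuous_at_imp_continuous_on)
  have Vc: "continuous_on UNIV V" unfolding V_def using d by (intro continuous_intros cu) auto
  have Vlim: "(V \<longlongrightarrow> r^2) at_bot"
    unfolding V_def r2 using tendsto_divide[OF tendsto_mult[OF tendsto_const[of 2] ubot] tendsto_const[of \<delta>]] d by simp
  obtain w v where wv: "\<And>x. (w has_real_derivative v x) (at x)" "\<And>x. (v has_real_derivative V x * w x) (at x)"
    "\<And>x. w x \<noteq> 0 \<or> v x \<noteq> 0" "\<forall>\<^sub>F x in at_bot. w x \<noteq> 0" "((\<lambda>x. v x / w x) \<longlongrightarrow> r) at_bot"
    using EX[OF Vc r0 Vlim] by blast
  define p where "p z = complex_of_real (exp(-k*z) * w z)" for z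
  define q where "q z = complex_of_real (exp(-k*z) * (v z - k * w z))" for z
  have ric: "riccati_solution \<delta> c u (complex_of_real lamt) p q"
    unfolding riccati_solution_def
  proof (intro conjI allI)
    fix z
    have "((\<lambda>z. exp(-k*z) * w z) has_real_derivative exp(-k*z) * (v z - k * w z)) (at z)"
      by (rule derivative_eq_intros wv refl | simp)+ (simp add: algebra_simps)
    then show "(p has_vector_derivative q z) (at z)" unfolding p_def q_def
      by (rule has_vector_derivative_of_real)
    have "((\<lambda>z. exp(-k*z) * (v z - k * w z)) has_real_derivative
        (-(k^2) + V z) * (exp(-k*z) * w z) - (2*k) * (exp(-k*z) * (v z - k * w z))) (at z)"
      by (rule derivative_eq_intros wv refl | simp)+ (simp add: algebra_simps power2_eq_square)
    from has_vector_derivative_of_real[OF this]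
    have "(q has_vector_derivative complex_of_real ((-(k^2) + V z) * (exp(-k*z) * w z) - (2*k) * (exp(-k*z) * (v z - k * w z)))) (at z)"
      unfolding q_def .
    moreover have "complex_of_real ((-(k^2) + V z) * (exp(-k*z) * w z) - (2*k) * (exp(-k*z) * (v z - k * w z)))
        = (complex_of_real lamt - 1 + complex_of_real (2 * u z)) / complex_of_real \<delta> * p z - complex_of_real (c / \<delta>) * q z"
    proof -
      have "(complex_of_real lamt - 1 + complex_of_real (2 * u z)) / complex_of_real \<delta> = complex_of_real (-(k^2) + V z)"
        "complex_of_real (c / \<delta>) = complex_of_real (2*k)"
        using d by (simp_all add: k_def ldef V_def field_simps power2_eq_square)
      then show ?thesis by (simp add: p_def q_def)
    qed
    ultimately show "(q has_vector_derivative (complex_of_real lamt - 1 + complex_of_real (2 * u z)) / complex_of_real \<delta> * p z - complex_of_real (c / \<delta>) * q z) (at z)"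
      by simp
    show "p z \<noteq> 0 \<or> q z \<noteq> 0" using wv(3)[of z] by (auto simp: p_def q_def)
  qed
  have bot: "proj_tendsto p q (mu_u_minus \<delta> c (complex_of_real lamt)) at_bot"
    unfolding proj_tendsto_def mum
  proof
    show ev: "\<forall>\<^sub>F z in at_bot. p z \<noteq> 0" using wv(4) by eventually_elim (simp add: p_def)
    have "((\<lambda>x. complex_of_real (v x / w x - k)) \<longlongrightarrow> complex_of_real (r - k)) at_bot"
      by (intro tendsto_of_real tendsto_diff wv(5) tendsto_const)
    moreover have "\<forall>\<^sub>F z in at_bot. complex_of_real (v z / w z - k) = q z / p z"
      using wv(4) by eventually_elim (simp add: p_def q_def field_simps)
    ultimately show "((\<lambda>z. q z / p z) \<longlongrightarrow> complex_of_real (r - k)) at_bot"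
      by (rule tendsto_cong[THEN iffD1, rotated])
  qed
  have eig: "eigenvalue_ext \<delta> c u (complex_of_real lamt)"
    unfolding eigenvalue_ext_def using lam0 ric bot TOPall[OF ric] by auto
  show ?thesis using lam0 mus muu eig TOPall lampos by blast
qed

end
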